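(* Let $\omega\in(0,1]$, $R_j>0$, $M^{(j)}>0$, and let $F^{(j)}$ and $g$ be as in the context, with $\|F^{(j)}(p,q,t)\|_{R_j}\le M^{(j)}$ and, for all $x\in\mathbb{C}$ with $|x|\le R_j^2$ and all $t\in\mathbb{R}^+$, $$\Re g(x,t)\ge\omega/2,\qquad |g(x,t)|\le\tfrac32\omega.$$ Let $\chi=\sum_{\underline\alpha}\mathcal{F}_{\underline\alpha}(pq,t)p^{\alpha_1}q^{\alpha_2}$ be the function defined in the context. Then for every $\delta\in(0,1)$, $$\sum_{\underline\alpha}\sup_{|x|\le R_j^2,\,t\ge0}|\mathcal{F}_{\underline\alpha}(x,t)|\,((1-\delta)R_j)^{|\underline\alpha|}\le\frac{4M^{(j)}}{\omega\delta^2},\qquad \sum_{\underline\alpha}\sup_{|x|\le R_j^2,\,t\ge0}|\partial_t\mathcal{F}_{\underline\alpha}(x,t)|\,((1-\delta)R_j)^{|\underline\alpha|}\le\frac{4M^{(j)}}{\omega\delta^2};$$ in particular the series defining $\chi$ and $\partial_t\chi$ converge on $\mathcal{Q}_{(1-\delta)R_j}\times\mathbb{R}^+$, are bounded there in modulus by $4M^{(j)}/(\omega\delta^2)$, and $\chi$ solves the homological equation $[g(pq,t)\,\eth+\partial_t]\chi=F^{(j)}$.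
   Context: $\mathbb{R}^+:=[0,\infty)$; $\mathcal{Q}_\rho:=\{(p,q)\in\mathbb{C}^2:|p|,|q|\le\rho\}$; multi-indices $\underline\alpha=(\alpha_1,\alpha_2)\in\mathbb{N}^2$, $|\underline\alpha|=\alpha_1+\alpha_2$. Taylor norm: $\|G\|_\rho:=\sum_{\underline\alpha}\sup_{t\in\mathbb{R}^+}|g_{\underline\alpha}(t)|\rho^{|\underline\alpha|}$ for $G=\sum g_{\underline\alpha}(t)p^{\alpha_1}q^{\alpha_2}$. $F^{(j)}(p,q,t)=\sum_{|\underline\alpha|\ge3,\ \alpha_1\ne\alpha_2}f_{\underline\alpha}(t)p^{\alpha_1}q^{\alpha_2}$ contains only "mixed" monomials, with each $f_{\underline\alpha}$ continuous on $\mathbb{R}^+$. $g(x,t)$ is a complex function, holomorphic in $x$ for $|x|\le R_j^2$ and continuous in $t\in\mathbb{R}^+$. $\eth:=q\partial_q-p\partial_p$. Set $A(x,t):=\int_0^tg(x,s)\,ds$ and, for each $\underline\alpha$, $\lambda:=\alpha_2-\alpha_1$. Define $\mathcal{F}_{\underline\alpha}\equiv0$ when $\alpha_1=\alpha_2$ or $f_{\underline\alpha}\equiv0$; otherwise $$\mathcal{F}_{\underline\alpha}(x,t):=e^{-\lambda A(x,t)}\Big[\mathcal{F}_{\underline\alpha,0}(x)+\int_0^te^{\lambda A(x,s)}f_{\underline\alpha}(s)\,ds\Big],$$ with $\mathcal{F}_{\underline\alpha,0}\equiv0$ if $\lambda>0$ and $\mathcal{F}_{\underline\alpha,0}(x):=-\int_0^\infty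 e^{\lambda A(x,s)}f_{\underline\alpha}(s)\,ds$ if $\lambda<0$ (so that then $\mathcal{F}_{\underline\alpha}(x,t)=-\int_t^\infty e^{\lambda(A(x,s)-A(x,t))}f_{\underline\alpha}(s)\,ds$). Then $\chi(p,q,t):=\sum_{\underline\alpha}\mathcal{F}_{\underline\alpha}(pq,t)p^{\alpha_1}q^{\alpha_2}$. *)

theory Defs
  imports "HOL-Analysis.Analysis"
begin

text \<open>Multi-indices are pairs (alpha1, alpha2) of naturals; a time-dependent Taylor
  series G = sum g_alpha(t) p^alpha1 q^alpha2 is represented by its coefficient
  function of type nat \<times> nat \<Rightarrow> real \<Rightarrow> complex (only t \<ge> 0 is relevant).\<close>

definition taylor_norm :: "(nat \<times> nat \<Rightarrow> real \<Rightarrow> complex) \<Rightarrow> real \<Rightarrow> ennreal" where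
  "taylor_norm G \<rho> =
     (\<Sum>\<^sub>\<infinity>\<alpha>. (SUP t\<in>{0..}. ennreal (cmod (G \<alpha> t))) * ennreal \<rho> ^ (fst \<alpha> + snd \<alpha>))"

definition taylor_eval :: "(nat \<times> nat \<Rightarrow> real \<Rightarrow> complex) \<Rightarrow> complex \<Rightarrow> complex \<Rightarrow> real \<Rightarrow> complex" where
  "taylor_eval G p q t = (\<Sum>\<^sub>\<infinity>\<alpha>. G \<alpha> t * p ^ fst \<alpha> * q ^ snd \<alpha>)"

definition Aint :: "(complex \<Rightarrow> real \<Rightarrow> complex) \<Rightarrow> complex \<Rightarrow> real \<Rightarrow> complex" where
  "Aint g x t = integral {0..t} (\<lambda>s. g x s)"

definition lam :: "nat \<times> nat \<Rightarrow> complex" where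
  "lam \<alpha> = of_int (int (snd \<alpha>) - int (fst \<alpha>))"

definition Fcoef0 :: "(nat \<times> nat \<Rightarrow> real \<Rightarrow> complex) \<Rightarrow> (complex \<Rightarrow> real \<Rightarrow> complex)
    \<Rightarrow> nat \<times> nat \<Rightarrow> complex \<Rightarrow> complex" where
  "Fcoef0 f g \<alpha> x =
     (if fst \<alpha> < snd \<alpha> then 0
      else - integral {0..} (\<lambda>s. exp (lam \<alpha> * Aint g x s) * f \<alpha> s))"

definition Fcoef :: "(nat \<times> nat \<Rightarrow> real \<Rightarrow> complex) \<Rightarrow> (complex \<Rightarrow> real \<Rightarrow> complex)
    \<Rightarrow> nat \<times> nat \<Rightarrow> complex \<Rightarrow> real \<Rightarrow> complex" where
  "Fcoef f g \<alpha> x t =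
     (if fst \<alpha> = snd \<alpha> \<or> (\<forall>s\<ge>0. f \<alpha> s = 0) then 0
      else exp (- lam \<alpha> * Aint g x t) *
             (Fcoef0 f g \<alpha> x + integral {0..t} (\<lambda>s. exp (lam \<alpha> * Aint g x s) * f \<alpha> s)))"

definition chi :: "(nat \<times> nat \<Rightarrow> real \<Rightarrow> complex) \<Rightarrow> (complex \<Rightarrow> real \<Rightarrow> complex)
    \<Rightarrow> complex \<Rightarrow> complex \<Rightarrow> real \<Rightarrow> complex" where
  "chi f g p q t = (\<Sum>\<^sub>\<infinity>\<alpha>. Fcoef f g \<alpha> (p * q) t * p ^ fst \<alpha> * q ^ snd \<alpha>)"

end

theory Submission
  imports Defs "HOL-Complex_Analysis.Complex_Analysis"
begin



lemma holo_lipschitz: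
  fixes h :: "complex \<Rightarrow> complex"
  assumes hol: "h holomorphic_on U" and U: "open U" and e: "e > 0"
    and sub: "cball x0 (2*e) \<subseteq> U"
    and bnd: "\<And>x. x \<in> U \<Longrightarrow> cmod (h x) \<le> B"
    and y: "y \<in> cball x0 e" and z: "z \<in> cball x0 e"
  shows "cmod (h y - h z) \<le> B / e * cmod (y - z)"
proof (rule field_differentiable_bound[of "cball x0 e" h "deriv h"])
  show "convex (cball x0 e)" by simp
  fix w assume w: "w \<in> cball x0 e"
  have wU: "w \<in> U" using w sub e by (auto simp: dist_norm)
  show "(h has_field_derivative deriv h w) (at w within cball x0 e)"
    using holomorphic_derivI[OF hol U wU] .
  have cw: "cball w e \<subseteq> U"
  proof
    fix v assume "v \<in> cball w e"
    then have "dist x0 v \<le> 2*e" using w dist_triangle[of x0 v w] by (auto simp: dist_commute)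
    then show "v \<in> U" using sub by auto
  qed
  have "cmod ((deriv ^^ 1) h w) \<le> fact 1 * B / e ^ 1"
  proof (rule Cauchy_inequality)
    show "h holomorphic_on ball w e" using hol cw ball_subset_cball holomorphic_on_subset by blast
    show "continuous_on (cball w e) h"
      using holomorphic_on_imp_continuous_on[OF hol] cw continuous_on_subset by blast
    show "cmod (h x) \<le> B" if "cmod (w - x) = e" for x
      using that cw bnd by (auto simp: dist_norm)
  qed (use e in auto)
  then show "cmod (deriv h w) \<le> B / e" by simp
qed (use y z in auto)

lemma holo_integral:
  fixes h :: "complex \<Rightarrow> real \<Rightarrow> complex" and S :: "real set"
  assumes U: "open U"
    and int: "\<And>x. x \<in> U \<Longrightarrow> h x integrable_on S"
    and hol: "\<And>s. s \<in> S \<Longrightarrow> (\<lambda>x. h x s) holomorphic_on U"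
    and phi: "phi integrable_on S"
    and bnd: "\<And>x s. x \<in> U \<Longrightarrow> s \<in> S \<Longrightarrow> cmod (h x s) \<le> phi s"
  shows "(\<lambda>x. integral S (h x)) holomorphic_on U"
  unfolding holomorphic_on_def
proof
  fix x0 assume x0: "x0 \<in> U"
  obtain e2 where e2: "e2 > 0" "cball x0 e2 \<subseteq> U" using U x0 open_contains_cball by blast
  define e where "e = e2/2"
  have e: "e > 0" "cball x0 (2*e) \<subseteq> U" using e2 by (auto simp: e_def)
  have ball_sub: "ball x0 e \<subseteq> U" using e by (smt (verit) ball_subset_cball mem_cball mem_ball subset_iff)
  have lip: "cmod (h y s - h z s) \<le> phi s / e * cmod (y - z)"
    if "s \<in> S" "y \<in> cball x0 e" "z \<in> cball x0 e" for s y z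
    using holo_lipschitz[OF hol[OF that(1)] U e(1) e(2) _ that(2,3), of "phi s"] bnd that(1) by blast
  define D where "D = integral S (\<lambda>s. deriv (\<lambda>x. h x s) x0)"
  have "((\<lambda>y. (integral S (h y) - integral S (h x0)) / (y - x0)) \<longlongrightarrow> D) (at x0 within ball x0 e)"
    unfolding tendsto_at_iff_sequentially comp_def
  proof (intro allI impI)
    fix X :: "nat \<Rightarrow> complex" assume X: "\<forall>i. X i \<in> ball x0 e - {x0}" and XL: "X \<longlonglongrightarrow> x0"
    define q where "q k s = (h (X k) s - h x0 s) / (X k - x0)" for k s
    have qi: "q k integrable_on S" for k
      unfolding q_def using X ball_sub x0
      by (intro integrable_on_divide integrable_diff int) auto
    have "(\<lambda>k. integral S (q k)) \<longlonglongrightarrow> integral S (\<lambda>s. deriv (\<lambda>x. h x s) x0)"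
    proof (rule dominated_convergence(2)[OF qi])
      show "(\<lambda>s. phi s / e) integrable_on S" using phi integrable_on_divide by blast
      fix k s assume s: "s \<in> S"
      have "X k \<noteq> x0" "X k \<in> cball x0 e" using X[rule_format, of k] by auto
      then show "norm (q k s) \<le> phi s / e"
        using lip[OF s \<open>X k \<in> cball x0 e\<close>, of x0] e
        by (auto simp: q_def norm_divide divide_simps)
    next
      fix s assume s: "s \<in> S"
      have "((\<lambda>x. h x s) has_field_derivative deriv (\<lambda>x. h x s) x0) (at x0)"
        using holomorphic_derivI[OF hol[OF s] U x0] .
      then have "((\<lambda>y. (h y s - h x0 s) / (y - x0)) \<longlongrightarrow> deriv (\<lambda>x. h x s) x0) (at x0)"
        by (simp add: has_field_derivative_iff)
      then show "(\<lambda>k. q k s) \<longlonglongrightarrow> deriv (\<lambda>x. h x s) x0"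
        unfolding tendsto_at_iff_sequentially comp_def q_def using X XL by auto
    qed
    moreover have "integral S (q k) = (integral S (h (X k)) - integral S (h x0)) / (X k - x0)" for k
      unfolding q_def using X ball_sub x0 by (subst integral_divide, subst integral_diff) (auto intro!: int)
    ultimately show "(\<lambda>k. (integral S (h (X k)) - integral S (h x0)) / (X k - x0)) \<longlonglongrightarrow> D"
      by (simp add: D_def)
  qed
  then have "((\<lambda>x. integral S (h x)) has_field_derivative D) (at x0)"
    using has_field_derivative_iff at_within_open[of x0 "ball x0 e"] e by force
  then show "(\<lambda>x. integral S (h x)) field_differentiable at x0 within U"
    using field_differentiable_at_within field_differentiable_def by blast
qed




lemma int_deriv0:
  fixes h :: "real \<Rightarrow> 'a::banach"
  assumes "continuous_on {0..} h" "0 \<le> t"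
  shows "((\<lambda>u. integral {0..u} h) has_vector_derivative h t) (at t within {0..})"
proof -
  have "((\<lambda>u. integral {0..u} h) has_vector_derivative h t) (at t within {0..t+1})"
    using assms by (intro integral_has_vector_derivative) (auto elim: continuous_on_subset)
  moreover have "at t within {0..t+1} = at t within {0..}"
    by (rule at_within_nhd[of t "{t-1<..<t+1}"]) auto
  ultimately show ?thesis by simp
qed

locale setting =
  fixes \<omega> R M :: real
    and f :: "nat \<times> nat \<Rightarrow> real \<Rightarrow> complex"
    and g :: "complex \<Rightarrow> real \<Rightarrow> complex"
  assumes \<omega>: "0 < \<omega>" "\<omega> \<le> 1"
    and R: "0 < R" and M: "0 < M"
    and f_mixed: "\<And>\<alpha> t. 0 \<le> t \<Longrightarrow> fst \<alpha> + snd \<alpha> < 3 \<or> fst \<alpha> = snd \<alpha> \<Longrightarrow> f \<alpha> t = 0"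
    and f_cont: "\<And>\<alpha>. continuous_on {0..} (f \<alpha>)"
    and g_hol: "\<And>t. 0 \<le> t \<Longrightarrow> (\<lambda>x. g x t) holomorphic_on cball 0 (R\<^sup>2)"
    and g_cont: "\<And>x. cmod x \<le> R\<^sup>2 \<Longrightarrow> continuous_on {0..} (g x)"
    and F_norm: "taylor_norm f R \<le> ennreal M"
    and g_re: "\<And>x t. cmod x \<le> R\<^sup>2 \<Longrightarrow> 0 \<le> t \<Longrightarrow> Re (g x t) \<ge> \<omega> / 2"
    and g_abs: "\<And>x t. cmod x \<le> R\<^sup>2 \<Longrightarrow> 0 \<le> t \<Longrightarrow> cmod (g x t) \<le> 3 / 2 * \<omega>"
begin

lemma g_int: "cmod x \<le> R\<^sup>2 \<Longrightarrow> g x integrable_on {a..t}" if "0 \<le> a"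
  using that by (intro integrable_continuous_interval continuous_on_subset[OF g_cont]) auto

lemma A_deriv:
  assumes x: "cmod x \<le> R\<^sup>2" and t: "0 \<le> t"
  shows "(Aint g x has_vector_derivative g x t) (at t within {0..})"
proof -
  have "((\<lambda>u. integral {0..u} (g x)) has_vector_derivative g x t) (at t within {0..t+1})"
    using g_cont[OF x] t by (intro integral_has_vector_derivative) (auto elim: continuous_on_subset)
  moreover have "at t within {0..t+1} = at t within {0..}"
    by (rule at_within_nhd[of t "{t-1<..<t+1}"]) auto
  ultimately show ?thesis by (simp add: Aint_def[abs_def])
qed

lemma A_cont: "cmod x \<le> R\<^sup>2 \<Longrightarrow> continuous_on {0..} (Aint g x)"
  using A_deriv has_vector_derivative_continuous continuous_on_eq_continuous_within by fastforce

lemma A0: "Aint g x 0 = 0"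
  by (simp add: Aint_def)

lemma A_split:
  assumes x: "cmod x \<le> R\<^sup>2" and "0 \<le> s" "s \<le> t"
  shows "Aint g x t = Aint g x s + integral {s..t} (g x)"
  using Henstock_Kurzweil_Integration.integral_combine[of 0 s t "g x"] g_int[OF _ x, of 0 t] assms
  by (simp add: Aint_def)

lemma A_re:
  assumes x: "cmod x \<le> R\<^sup>2" and s: "0 \<le> s" "s \<le> t"
  shows "\<omega>/2*(t-s) \<le> Re (Aint g x t - Aint g x s)"
proof -
  have "\<omega>/2 * (t - s) \<le> (integral {s..t} (g x)) \<bullet> 1"
    using integral_component_lbound_real[of "g x" s t "\<omega>/2" 1] g_int[OF _ x, of s t] s g_re[OF x]
    by auto
  then show ?thesis using A_split[OF x s] s by simp
qed

lemma A_norm: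
  assumes x: "cmod x \<le> R\<^sup>2" and t: "0 \<le> t"
  shows "cmod (Aint g x t) \<le> 3/2*\<omega>*t"
proof -
  have "cmod (Aint g x t) \<le> integral {0..t} (\<lambda>s. 3/2*\<omega>)"
    unfolding Aint_def
    using g_int[OF _ x, of 0 t] g_abs[OF x]
    by (intro Henstock_Kurzweil_Integration.integral_norm_bound_integral) auto
  then show ?thesis using t by (simp add: mult_ac)
qed

end



context setting begin

definition sa where "sa \<alpha> = enn2real (SUP t\<in>{0..}. ennreal (cmod (f \<alpha> t)))"

lemma sup_le_M: "(SUP t\<in>{0..}. ennreal (cmod (f \<alpha> t))) * ennreal R ^ (fst \<alpha> + snd \<alpha>) \<le> ennreal M"
proof -
  have "(SUP t\<in>{0..}. ennreal (cmod (f \<alpha> t))) * ennreal R ^ (fst \<alpha> + snd \<alpha>) \<le> taylor_norm f R"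
    unfolding taylor_norm_def
    using infsum_mono_neutral[of "\<lambda>\<alpha>. (SUP t\<in>{0..}. ennreal (cmod (f \<alpha> t))) * ennreal R ^ (fst \<alpha> + snd \<alpha>)" "{\<alpha>}"
       "\<lambda>\<alpha>. (SUP t\<in>{0..}. ennreal (cmod (f \<alpha> t))) * ennreal R ^ (fst \<alpha> + snd \<alpha>)" UNIV]
    by (simp add: nonneg_summable_on_complete)
  then show ?thesis using F_norm by simp
qed

lemma sup_fin: "(SUP t\<in>{0..}. ennreal (cmod (f \<alpha> t))) = ennreal (sa \<alpha>)"
proof -
  let ?S = "(SUP t\<in>{0..}. ennreal (cmod (f \<alpha> t)))"
  have "ennreal R ^ (fst \<alpha> + snd \<alpha>) > 0" using R by (subst ennreal_power) auto
  moreover have "ennreal R ^ (fst \<alpha> + snd \<alpha>) < top" using R by (subst ennreal_power) auto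
  ultimately have "?S < top"
    using sup_le_M[of \<alpha>]
    by (metis ennreal_less_top ennreal_mult_eq_top_iff le_less_trans not_less_zero top.not_eq_extremum
        order.strict_iff_not)
  then show ?thesis unfolding sa_def by simp
qed

lemma sa_nonneg: "0 \<le> sa \<alpha>" by (simp add: sa_def)

lemma f_le: "0 \<le> t \<Longrightarrow> cmod (f \<alpha> t) \<le> sa \<alpha>"
proof -
  assume t: "0 \<le> t"
  have "ennreal (cmod (f \<alpha> t)) \<le> (SUP t\<in>{0..}. ennreal (cmod (f \<alpha> t)))"
    using t by (intro SUP_upper) auto
  then show ?thesis using sup_fin sa_nonneg by (simp add: ennreal_le_iff)
qed

lemma b_fin_sum: "finite F \<Longrightarrow> (\<Sum>\<alpha>\<in>F. sa \<alpha> * R^(fst \<alpha>+snd \<alpha>)) \<le> M"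
proof -
  assume F: "finite F"
  let ?h = "\<lambda>\<alpha>. (SUP t\<in>{0..}. ennreal (cmod (f \<alpha> t))) * ennreal R ^ (fst \<alpha> + snd \<alpha>)"
  have eq: "ennreal (sa \<alpha> * R^(fst \<alpha>+snd \<alpha>)) = ?h \<alpha>" for \<alpha>
    using R sa_nonneg[of \<alpha>] by (simp add: sup_fin ennreal_mult ennreal_power)
  have "ennreal (\<Sum>\<alpha>\<in>F. sa \<alpha> * R^(fst \<alpha>+snd \<alpha>)) = (\<Sum>\<alpha>\<in>F. ?h \<alpha>)"
    using R sa_nonneg by (subst sum_ennreal[symmetric]) (auto simp: eq)
  also have "\<dots> = infsum ?h F" using F by simp
  also have "\<dots> \<le> infsum ?h UNIV"
    by (rule infsum_mono_neutral) (auto simp: nonneg_summable_on_complete)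
  also have "\<dots> \<le> M" using F_norm by (simp add: taylor_norm_def)
  finally show ?thesis using M by simp
qed

lemma b_summable: "(\<lambda>\<alpha>. sa \<alpha> * R^(fst \<alpha>+snd \<alpha>)) summable_on UNIV"
  using R sa_nonneg b_fin_sum
  by (intro nonneg_bdd_above_summable_on) (auto intro!: bdd_aboveI[of _ M])

lemma b_infsum: "(\<Sum>\<^sub>\<infinity>\<alpha>. sa \<alpha> * R^(fst \<alpha>+snd \<alpha>)) \<le> M"
  using b_summable b_fin_sum by (rule infsum_le_finite_sums)

end



definition ll :: "nat \<times> nat \<Rightarrow> int" where "ll \<alpha> = int (snd \<alpha>) - int (fst \<alpha>)"

lemma lam_ll: "lam \<alpha> = of_int (ll \<alpha>)" by (simp add: lam_def ll_def)

lemma Re_lam_mult: "Re (lam \<alpha> * z) = of_int (ll \<alpha>) * Re z"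
  by (simp add: lam_ll)

lemma cmod_lam: "cmod (lam \<alpha>) = \<bar>of_int (ll \<alpha>)\<bar>"
  by (simp add: lam_ll)

lemma int_exp_0t:
  fixes c t :: real
  assumes c: "c > 0" and t: "0 \<le> t"
  shows "((\<lambda>s. exp(-c*(t-s))) has_integral (1 - exp(-c*t))/c) {0..t}"
proof -
  have "((\<lambda>s. exp(-c*(t-s))) has_integral (exp(-c*(t-t))/c - exp(-c*(t-0))/c)) {0..t}"
    using c t
    by (intro fundamental_theorem_of_calculus[where f="\<lambda>s. exp(-c*(t-s))/c"])
       (auto intro!: derivative_eq_intros simp flip: has_real_derivative_iff_has_vector_derivative)
  then show ?thesis by (simp add: diff_divide_distrib)
qed

lemma int_exp_t:
  fixes c t :: real
  assumes c: "c > 0"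
  shows "((\<lambda>s. exp(-c*(s-t))) has_integral (1/c)) {t..}"
proof -
  have "((\<lambda>s. exp (c * t) * exp (- c * s)) has_integral (exp (c * t) * (exp (- c * t) / c))) {t..}"
    using has_integral_exp_minus_to_infinity[OF c, of t] by (rule has_integral_mult_right)
  moreover have "(\<lambda>s. exp (c * t) * exp (- c * s)) = (\<lambda>s. exp (- c * (s - t)))"
    by (rule ext) (simp add: exp_add[symmetric] algebra_simps)
  moreover have "exp (c * t) * (exp (- c * t) / c) = 1 / c"
    using c by (simp add: exp_minus field_simps)
  ultimately show ?thesis by metis
qed

context setting begin

definition cc where "cc \<alpha> = \<bar>of_int (ll \<alpha>)\<bar> * \<omega> / 2"

lemma exp_bound:
  assumes x: "cmod x \<le> R\<^sup>2" and s: "0 \<le> s" and t: "0 \<le> t"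
    and sgn: "(0 < ll \<alpha> \<and> s \<le> t) \<or> (ll \<alpha> < 0 \<and> t \<le> s)"
  shows "cmod (exp (lam \<alpha> * (Aint g x s - Aint g x t))) \<le> exp (- cc \<alpha> * \<bar>s - t\<bar>)"
proof -
  let ?l = "real_of_int (ll \<alpha>)"
  have "?l * Re (Aint g x s - Aint g x t) \<le> - cc \<alpha> * \<bar>s - t\<bar>"
    using sgn
  proof
    assume h: "0 < ll \<alpha> \<and> s \<le> t"
    have "\<omega>/2*(t-s) \<le> Re (Aint g x t - Aint g x s)" using A_re[OF x s] h by auto
    then have "Re (Aint g x s - Aint g x t) \<le> - (\<omega>/2*(t-s))" by simp
    then have "?l * Re (Aint g x s - Aint g x t) \<le> ?l * (- (\<omega>/2*(t-s)))"
      using h by (intro mult_left_mono) auto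
    then show ?thesis using h by (simp add: cc_def)
  next
    assume h: "ll \<alpha> < 0 \<and> t \<le> s"
    have "\<omega>/2*(s-t) \<le> Re (Aint g x s - Aint g x t)" using A_re[OF x t] h by auto
    then have "?l * Re (Aint g x s - Aint g x t) \<le> ?l * (\<omega>/2*(s-t))"
      using h by (intro mult_left_mono_neg) auto
    then show ?thesis using h by (simp add: cc_def)
  qed
  then show ?thesis by (simp only: norm_exp_eq_Re Re_lam_mult exp_le_cancel_iff)
qed

lemma E_cont: "cmod x \<le> R\<^sup>2 \<Longrightarrow> continuous_on {0..} (\<lambda>s. exp (c * Aint g x s) * f \<alpha> s)"
  using A_cont[of x] f_cont[of \<alpha>] by (intro continuous_intros) auto

lemma E_bound_neg:
  assumes "ll \<alpha> < 0" "cmod x \<le> R\<^sup>2" "0 \<le> s"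
  shows "cmod (exp (lam \<alpha> * Aint g x s) * f \<alpha> s) \<le> sa \<alpha> * exp (- cc \<alpha> * s)"
proof -
  have "cmod (exp (lam \<alpha> * Aint g x s)) \<le> exp (- cc \<alpha> * s)"
    using exp_bound[OF assms(2,3), of 0 \<alpha>] assms by (simp add: A0)
  then show ?thesis
    using f_le[OF assms(3), of \<alpha>] sa_nonneg[of \<alpha>]
    by (simp add: norm_mult mult_mono mult.commute)
qed

lemma cc_pos: "ll \<alpha> \<noteq> 0 \<Longrightarrow> cc \<alpha> > 0"
  using \<omega> by (simp add: cc_def)

lemma E_int_neg:
  assumes "ll \<alpha> < 0" "cmod x \<le> R\<^sup>2" "0 \<le> t"
  shows "(\<lambda>s. exp (lam \<alpha> * Aint g x s) * f \<alpha> s) integrable_on {t..}"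
proof (rule measurable_bounded_by_integrable_imp_integrable)
  show "(\<lambda>s. exp (lam \<alpha> * Aint g x s) * f \<alpha> s) \<in> borel_measurable (lebesgue_on {t..})"
    using assms by (intro continuous_imp_measurable_on_sets_lebesgue continuous_on_subset[OF E_cont]) auto
  show "(\<lambda>s. sa \<alpha> * exp (- cc \<alpha> * s)) integrable_on {t..}"
    using integrable_cmul[OF integrable_on_exp_minus_to_infinity[OF cc_pos, of \<alpha> t], of "sa \<alpha>"] assms
    by simp
  show "cmod (exp (lam \<alpha> * Aint g x s) * f \<alpha> s) \<le> sa \<alpha> * exp (- cc \<alpha> * s)" if "s \<in> {t..}" for s
    using E_bound_neg[OF assms(1,2)] that assms by auto
qed auto

lemma Fcoef_pos:
  assumes x: "cmod x \<le> R\<^sup>2" and t: "0 \<le> t" and lt: "fst \<alpha> < snd \<alpha>"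
    and nz: "\<not> (\<forall>s\<ge>0. f \<alpha> s = 0)"
  shows "Fcoef f g \<alpha> x t = integral {0..t} (\<lambda>s. exp (lam \<alpha> * (Aint g x s - Aint g x t)) * f \<alpha> s)"
proof -
  have "Fcoef f g \<alpha> x t = exp (- lam \<alpha> * Aint g x t) * integral {0..t} (\<lambda>s. exp (lam \<alpha> * Aint g x s) * f \<alpha> s)"
    using lt nz by (auto simp: Fcoef_def Fcoef0_def)
  also have "\<dots> = integral {0..t} (\<lambda>s. exp (- lam \<alpha> * Aint g x t) * (exp (lam \<alpha> * Aint g x s) * f \<alpha> s))"
    by simp
  also have "\<dots> = integral {0..t} (\<lambda>s. exp (lam \<alpha> * (Aint g x s - Aint g x t)) * f \<alpha> s)"
    by (rule integral_cong) (simp add: right_diff_distrib exp_diff exp_minus field_simps)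
  finally show ?thesis .
qed

lemma Fcoef_neg:
  assumes x: "cmod x \<le> R\<^sup>2" and t: "0 \<le> t" and gt: "snd \<alpha> < fst \<alpha>"
    and nz: "\<not> (\<forall>s\<ge>0. f \<alpha> s = 0)"
  shows "Fcoef f g \<alpha> x t = - integral {t..} (\<lambda>s. exp (lam \<alpha> * (Aint g x s - Aint g x t)) * f \<alpha> s)"
proof -
  let ?E = "\<lambda>s. exp (lam \<alpha> * Aint g x s) * f \<alpha> s"
  have l: "ll \<alpha> < 0" using gt by (simp add: ll_def)
  have i1: "?E integrable_on {0..t}"
    using x by (intro integrable_continuous_interval continuous_on_subset[OF E_cont]) auto
  have i2: "?E integrable_on {t..}" using E_int_neg[OF l x t] .
  have "(?E has_integral (integral {0..t} ?E + integral {t..} ?E)) ({0..t} \<union> {t..})"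
  proof (rule has_integral_Un)
    have "{0..t} \<inter> {t..} = {t}" using t by auto
    then show "negligible ({0..t} \<inter> {t..})" by (simp add: negligible_sing)
  qed (use i1 i2 in auto)
  moreover have "{0..t} \<union> {t..} = {0::real..}" using t by auto
  ultimately have I: "integral {0..} ?E = integral {0..t} ?E + integral {t..} ?E"
    by (simp add: integral_unique)
  have "Fcoef f g \<alpha> x t = - (exp (- lam \<alpha> * Aint g x t) * integral {t..} ?E)"
    using gt nz by (auto simp: Fcoef_def Fcoef0_def I)
  also have "\<dots> = - integral {t..} (\<lambda>s. exp (- lam \<alpha> * Aint g x t) * ?E s)"
    by simp
  also have "integral {t..} (\<lambda>s. exp (- lam \<alpha> * Aint g x t) * ?E s)
      = integral {t..} (\<lambda>s. exp (lam \<alpha> * (Aint g x s - Aint g x t)) * f \<alpha> s)"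
    by (rule integral_cong) (simp add: right_diff_distrib exp_diff exp_minus field_simps)
  finally show ?thesis .
qed

lemma bound_arith:
  assumes "ll \<alpha> \<noteq> 0" "cmod F \<le> sa \<alpha> / cc \<alpha>"
  shows "cmod (lam \<alpha>) * cmod F \<le> 2 * sa \<alpha> / \<omega>"
proof -
  have "cmod (lam \<alpha>) * cmod F \<le> \<bar>of_int (ll \<alpha>)\<bar> * (sa \<alpha> / cc \<alpha>)"
    unfolding cmod_lam by (rule mult_left_mono) (use assms in auto)
  also have "\<dots> = 2 * sa \<alpha> / \<omega>" using assms(1) \<omega> by (simp add: cc_def field_simps)
  finally show ?thesis .
qed

lemma F_bound:
  assumes x: "cmod x \<le> R\<^sup>2" and t: "0 \<le> t"
  shows "cmod (lam \<alpha>) * cmod (Fcoef f g \<alpha> x t) \<le> 2 * sa \<alpha> / \<omega>"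
proof (cases "fst \<alpha> = snd \<alpha> \<or> (\<forall>s\<ge>0. f \<alpha> s = 0)")
  case True
  then show ?thesis using sa_nonneg[of \<alpha>] \<omega> by (simp add: Fcoef_def)
next
  case False
  then have ne: "fst \<alpha> \<noteq> snd \<alpha>" and nz: "\<not> (\<forall>s\<ge>0. f \<alpha> s = 0)" by auto
  have l0: "ll \<alpha> \<noteq> 0" using ne by (simp add: ll_def)
  have ccp: "cc \<alpha> > 0" using cc_pos[OF l0] .
  let ?h = "\<lambda>s. exp (lam \<alpha> * (Aint g x s - Aint g x t)) * f \<alpha> s"
  have hcont: "continuous_on {0..} ?h"
    using A_cont[OF x] f_cont[of \<alpha>] by (intro continuous_intros) auto
  show ?thesis
  proof (cases "fst \<alpha> < snd \<alpha>")
    case True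
    have l: "0 < ll \<alpha>" using True by (simp add: ll_def)
    have hint: "?h integrable_on {0..t}"
      by (intro integrable_continuous_interval continuous_on_subset[OF hcont]) auto
    have bint: "((\<lambda>s. sa \<alpha> * exp (- cc \<alpha> * (t - s))) has_integral (sa \<alpha> * ((1 - exp (- cc \<alpha> * t)) / cc \<alpha>))) {0..t}"
      using int_exp_0t[OF ccp t] by (rule has_integral_mult_right)
    have "cmod (Fcoef f g \<alpha> x t) \<le> integral {0..t} (\<lambda>s. sa \<alpha> * exp (- cc \<alpha> * (t - s)))"
      unfolding Fcoef_pos[OF x t True nz]
    proof (rule Henstock_Kurzweil_Integration.integral_norm_bound_integral[OF hint])
      show "(\<lambda>s. sa \<alpha> * exp (- cc \<alpha> * (t - s))) integrable_on {0..t}" using bint by blast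
      fix s assume s: "s \<in> {0..t}"
      have "cmod (exp (lam \<alpha> * (Aint g x s - Aint g x t))) \<le> exp (- cc \<alpha> * \<bar>s - t\<bar>)"
        by (rule exp_bound[OF x _ t]) (use s l in auto)
      moreover have e: "\<bar>s - t\<bar> = t - s" using s by auto
      ultimately have "cmod (exp (lam \<alpha> * (Aint g x s - Aint g x t))) \<le> exp (- cc \<alpha> * (t - s))"
        by (simp only: e)
      then show "cmod (?h s) \<le> sa \<alpha> * exp (- cc \<alpha> * (t - s))"
        using f_le[of s \<alpha>] s sa_nonneg[of \<alpha>] by (simp add: norm_mult mult_mono mult.commute)
    qed
    also have "\<dots> = sa \<alpha> * ((1 - exp (- cc \<alpha> * t)) / cc \<alpha>)" by (rule integral_unique[OF bint])
    also have "\<dots> \<le> sa \<alpha> / cc \<alpha>"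
    proof -
      have "sa \<alpha> * (1 - exp (- cc \<alpha> * t)) \<le> sa \<alpha> * 1"
        using sa_nonneg[of \<alpha>] by (intro mult_left_mono) auto
      then show ?thesis using ccp by (simp add: divide_right_mono)
    qed
    finally show ?thesis by (rule bound_arith[OF l0])
  next
    case False
    then have gt: "snd \<alpha> < fst \<alpha>" using ne by auto
    have l: "ll \<alpha> < 0" using gt by (simp add: ll_def)
    have hint: "?h integrable_on {t..}"
    proof -
      have "(\<lambda>s. exp (- lam \<alpha> * Aint g x t) * (exp (lam \<alpha> * Aint g x s) * f \<alpha> s)) integrable_on {t..}"
        by (rule integrable_on_mult_right[OF E_int_neg[OF l x t]])
      moreover have "(\<lambda>s. exp (- lam \<alpha> * Aint g x t) * (exp (lam \<alpha> * Aint g x s) * f \<alpha> s)) = ?h"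
        by (rule ext) (simp add: right_diff_distrib exp_diff exp_minus field_simps)
      ultimately show ?thesis by metis
    qed
    have bint: "((\<lambda>s. sa \<alpha> * exp (- cc \<alpha> * (s - t))) has_integral (sa \<alpha> * (1 / cc \<alpha>))) {t..}"
      using int_exp_t[OF ccp, of t] by (rule has_integral_mult_right)
    have "cmod (Fcoef f g \<alpha> x t) \<le> integral {t..} (\<lambda>s. sa \<alpha> * exp (- cc \<alpha> * (s - t)))"
      unfolding Fcoef_neg[OF x t gt nz] norm_minus_cancel
    proof (rule Henstock_Kurzweil_Integration.integral_norm_bound_integral[OF hint])
      show "(\<lambda>s. sa \<alpha> * exp (- cc \<alpha> * (s - t))) integrable_on {t..}" using bint by blast
      fix s assume s: "s \<in> {t..}"
      have "cmod (exp (lam \<alpha> * (Aint g x s - Aint g x t))) \<le> exp (- cc \<alpha> * \<bar>s - t\<bar>)"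
        by (rule exp_bound[OF x _ t]) (use s l t in auto)
      moreover have e: "\<bar>s - t\<bar> = s - t" using s by auto
      ultimately have "cmod (exp (lam \<alpha> * (Aint g x s - Aint g x t))) \<le> exp (- cc \<alpha> * (s - t))"
        by (simp only: e)
      then show "cmod (?h s) \<le> sa \<alpha> * exp (- cc \<alpha> * (s - t))"
        using f_le[of s \<alpha>] s t sa_nonneg[of \<alpha>] by (simp add: norm_mult mult_mono mult.commute)
    qed
    also have "\<dots> = sa \<alpha> / cc \<alpha>" using integral_unique[OF bint] by simp
    finally show ?thesis by (rule bound_arith[OF l0])
  qed
qed

lemma F_deriv:
  assumes x: "cmod x \<le> R\<^sup>2" and t: "0 \<le> t"
  shows "((\<lambda>s. Fcoef f g \<alpha> x s) has_vector_derivative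
           (f \<alpha> t - lam \<alpha> * g x t * Fcoef f g \<alpha> x t)) (at t within {0..})"
proof (cases "fst \<alpha> = snd \<alpha> \<or> (\<forall>s\<ge>0. f \<alpha> s = 0)")
  case True
  then have "(\<lambda>s. Fcoef f g \<alpha> x s) = (\<lambda>s. 0)" by (auto simp: Fcoef_def)
  moreover have "f \<alpha> t = 0" using True f_mixed[OF t, of \<alpha>] t by auto
  ultimately show ?thesis by simp
next
  case False
  let ?K = "Fcoef0 f g \<alpha> x"
  let ?E = "\<lambda>s. exp (lam \<alpha> * Aint g x s) * f \<alpha> s"
  let ?P = "\<lambda>s. exp (- lam \<alpha> * Aint g x s)"
  let ?Q = "\<lambda>s. ?K + integral {0..s} ?E"
  have eq: "(\<lambda>s. Fcoef f g \<alpha> x s) = (\<lambda>s. ?P s * ?Q s)"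
    using False by (intro ext) (auto simp add: Fcoef_def)
  have dA: "((\<lambda>s. - lam \<alpha> * Aint g x s) has_vector_derivative (- lam \<alpha> * g x t)) (at t within {0..})"
    using A_deriv[OF x t] by (rule has_vector_derivative_mult_right)
  have dP: "(?P has_vector_derivative (- lam \<alpha> * g x t) * exp (- lam \<alpha> * Aint g x t)) (at t within {0..})"
    using field_vector_diff_chain_within[OF dA, of exp "exp (- lam \<alpha> * Aint g x t)"]
    by (simp add: o_def DERIV_exp has_field_derivative_at_within)
  have dQ: "(?Q has_vector_derivative ?E t) (at t within {0..})"
    using has_vector_derivative_add[OF has_vector_derivative_const int_deriv0[OF E_cont[OF x, of "lam \<alpha>" \<alpha>] t], of ?K]
    by simp
  have D: "((\<lambda>s. ?P s * ?Q s) has_vector_derivative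
          (?P t * ?E t + (- lam \<alpha> * g x t) * exp (- lam \<alpha> * Aint g x t) * ?Q t)) (at t within {0..})"
    by (rule has_vector_derivative_mult[OF dP dQ])
  have Ft: "Fcoef f g \<alpha> x t = ?P t * ?Q t" using fun_cong[OF eq, of t] by simp
  have E2: "?P t * ?E t + (- lam \<alpha> * g x t) * exp (- lam \<alpha> * Aint g x t) * ?Q t
      = f \<alpha> t - lam \<alpha> * g x t * Fcoef f g \<alpha> x t"
    unfolding Ft by (simp add: exp_minus field_simps)
  show ?thesis using has_vector_derivative_eq_rhs[OF D E2] unfolding eq[symmetric] .
qed

lemma dF_bound:
  assumes x: "cmod x \<le> R\<^sup>2" and t: "0 \<le> t"
  shows "cmod (f \<alpha> t - lam \<alpha> * g x t * Fcoef f g \<alpha> x t) \<le> 4 * sa \<alpha>"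
proof -
  have "cmod (lam \<alpha> * g x t * Fcoef f g \<alpha> x t) = cmod (g x t) * (cmod (lam \<alpha>) * cmod (Fcoef f g \<alpha> x t))"
    by (simp add: norm_mult)
  also have "\<dots> \<le> (3/2*\<omega>) * (2 * sa \<alpha> / \<omega>)"
    using g_abs[OF x t] F_bound[OF x t, of \<alpha>] \<omega> by (intro mult_mono) auto
  also have "\<dots> = 3 * sa \<alpha>" using \<omega> by simp
  finally have "cmod (lam \<alpha> * g x t * Fcoef f g \<alpha> x t) \<le> 3 * sa \<alpha>" .
  then show ?thesis using f_le[OF t, of \<alpha>] norm_triangle_ineq4[of "f \<alpha> t" "lam \<alpha> * g x t * Fcoef f g \<alpha> x t"]
    by linarith
qed

lemma F_abs_bound:
  assumes x: "cmod x \<le> R\<^sup>2" and t: "0 \<le> t"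
  shows "cmod (Fcoef f g \<alpha> x t) \<le> 2 * sa \<alpha> / \<omega>"
proof (cases "fst \<alpha> = snd \<alpha>")
  case True
  then show ?thesis using sa_nonneg[of \<alpha>] \<omega> by (simp add: Fcoef_def)
next
  case False
  then have "1 \<le> cmod (lam \<alpha>)" by (simp add: cmod_lam ll_def)
  then have "cmod (Fcoef f g \<alpha> x t) \<le> cmod (lam \<alpha>) * cmod (Fcoef f g \<alpha> x t)"
    by (metis mult_le_cancel_right1 norm_ge_zero order_trans mult_right_mono mult_1)
  then show ?thesis using F_bound[OF x t, of \<alpha>] by linarith
qed

lemma ball_le: "x \<in> ball 0 (R\<^sup>2) \<Longrightarrow> cmod x \<le> R\<^sup>2"
  by (simp add: dist_norm)

lemma A_holo:
  assumes s: "0 \<le> s"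
  shows "(\<lambda>x. Aint g x s) holomorphic_on ball 0 (R\<^sup>2)"
  unfolding Aint_def
proof (rule holo_integral[where phi="\<lambda>_. 3/2*\<omega>"])
  show "(\<lambda>x. g x s') holomorphic_on ball 0 (R\<^sup>2)" if "s' \<in> {0..s}" for s'
    using g_hol[of s'] that ball_subset_cball holomorphic_on_subset by fastforce
  show "(\<lambda>s'. g x s') integrable_on {0..s}" if "x \<in> ball 0 (R\<^sup>2)" for x
    using g_int[OF _ ball_le[OF that], of 0 s] by simp
  show "cmod (g x s') \<le> 3/2*\<omega>" if "x \<in> ball 0 (R\<^sup>2)" "s' \<in> {0..s}" for x s'
    using g_abs[OF ball_le[OF that(1)]] that(2) by auto
qed auto

lemma I_holo:
  assumes t: "0 \<le> t"
  shows "(\<lambda>x. integral {0..t} (\<lambda>s. exp (lam \<alpha> * Aint g x s) * f \<alpha> s)) holomorphic_on ball 0 (R\<^sup>2)"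
proof (rule holo_integral[where phi="\<lambda>_. sa \<alpha> * exp (cmod (lam \<alpha>) * (3/2*\<omega>*t))"])
  show "(\<lambda>x. exp (lam \<alpha> * Aint g x s) * f \<alpha> s) holomorphic_on ball 0 (R\<^sup>2)" if "s \<in> {0..t}" for s
    using A_holo[of s] that by (auto intro!: holomorphic_intros)
  show "(\<lambda>s. exp (lam \<alpha> * Aint g x s) * f \<alpha> s) integrable_on {0..t}" if "x \<in> ball 0 (R\<^sup>2)" for x
    using ball_le[OF that] by (intro integrable_continuous_interval continuous_on_subset[OF E_cont]) auto
  show "cmod (exp (lam \<alpha> * Aint g x s) * f \<alpha> s) \<le> sa \<alpha> * exp (cmod (lam \<alpha>) * (3/2*\<omega>*t))"
    if "x \<in> ball 0 (R\<^sup>2)" "s \<in> {0..t}" for x s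
  proof -
    have x: "cmod x \<le> R\<^sup>2" using ball_le[OF that(1)] .
    have "Re (lam \<alpha> * Aint g x s) \<le> cmod (lam \<alpha> * Aint g x s)" by (rule complex_Re_le_cmod)
    also have "\<dots> = cmod (lam \<alpha>) * cmod (Aint g x s)" by (simp add: norm_mult)
    also have "\<dots> \<le> cmod (lam \<alpha>) * (3/2*\<omega>*t)"
    proof (rule mult_left_mono)
      have "cmod (Aint g x s) \<le> 3/2*\<omega>* s" using A_norm[OF x] that(2) by auto
      also have "\<dots> \<le> 3/2*\<omega>*t" using that(2) \<omega> by auto
      finally show "cmod (Aint g x s) \<le> 3/2*\<omega>*t" .
    qed auto
    finally have "cmod (exp (lam \<alpha> * Aint g x s)) \<le> exp (cmod (lam \<alpha>) * (3/2*\<omega>*t))"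
      by (simp add: norm_exp_eq_Re)
    then show ?thesis
      using f_le[of s \<alpha>] that(2) sa_nonneg[of \<alpha>] by (simp add: norm_mult mult_mono mult.commute)
  qed
qed auto

lemma K_holo:
  shows "(\<lambda>x. Fcoef0 f g \<alpha> x) holomorphic_on ball 0 (R\<^sup>2)"
proof (cases "fst \<alpha> < snd \<alpha>")
  case True
  then show ?thesis by (simp add: Fcoef0_def)
next
  case False
  show ?thesis
  proof (cases "fst \<alpha> = snd \<alpha>")
    case True
    then have "lam \<alpha> = 0" by (simp add: lam_def)
    then have "(\<lambda>x. Fcoef0 f g \<alpha> x) = (\<lambda>x. - integral {0..} (f \<alpha>))"
      using False by (simp add: Fcoef0_def)
    then show ?thesis by simp
  next
    case False2: False
    then have l: "ll \<alpha> < 0" using False by (simp add: ll_def)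
    have "(\<lambda>x. integral {0..} (\<lambda>s. exp (lam \<alpha> * Aint g x s) * f \<alpha> s)) holomorphic_on ball 0 (R\<^sup>2)"
    proof (rule holo_integral[where phi="\<lambda>s. sa \<alpha> * exp (- cc \<alpha> * s)"])
      show "(\<lambda>x. exp (lam \<alpha> * Aint g x s) * f \<alpha> s) holomorphic_on ball 0 (R\<^sup>2)" if "s \<in> {0..}" for s
        using A_holo[of s] that by (auto intro!: holomorphic_intros)
      show "(\<lambda>s. exp (lam \<alpha> * Aint g x s) * f \<alpha> s) integrable_on {0..}" if "x \<in> ball 0 (R\<^sup>2)" for x
        using E_int_neg[OF l ball_le[OF that], of 0] by simp
      show "(\<lambda>s. sa \<alpha> * exp (- cc \<alpha> * s)) integrable_on {0..}"
        using integrable_cmul[OF integrable_on_exp_minus_to_infinity[OF cc_pos, of \<alpha> 0], of "sa \<alpha>"] l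
        by simp
      show "cmod (exp (lam \<alpha> * Aint g x s) * f \<alpha> s) \<le> sa \<alpha> * exp (- cc \<alpha> * s)"
        if "x \<in> ball 0 (R\<^sup>2)" "s \<in> {0..}" for x s
        using E_bound_neg[OF l ball_le[OF that(1)]] that(2) by auto
    qed auto
    then show ?thesis using False by (simp add: Fcoef0_def holomorphic_intros)
  qed
qed

lemma F_holo:
  assumes t: "0 \<le> t"
  shows "(\<lambda>x. Fcoef f g \<alpha> x t) holomorphic_on ball 0 (R\<^sup>2)"
proof (cases "fst \<alpha> = snd \<alpha> \<or> (\<forall>s\<ge>0. f \<alpha> s = 0)")
  case True
  then show ?thesis by (simp add: Fcoef_def)
next
  case False
  then have "(\<lambda>x. Fcoef f g \<alpha> x t) = (\<lambda>x. exp (- lam \<alpha> * Aint g x t) *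
      (Fcoef0 f g \<alpha> x + integral {0..t} (\<lambda>s. exp (lam \<alpha> * Aint g x s) * f \<alpha> s)))"
    by (intro ext) (auto simp: Fcoef_def)
  moreover have "(\<lambda>x. exp (- lam \<alpha> * Aint g x t) *
      (Fcoef0 f g \<alpha> x + integral {0..t} (\<lambda>s. exp (lam \<alpha> * Aint g x s) * f \<alpha> s))) holomorphic_on ball 0 (R\<^sup>2)"
    using A_holo[OF t] K_holo[of \<alpha>] I_holo[OF t, of \<alpha>] by (intro holomorphic_intros) auto
  ultimately show ?thesis by simp
qed

end



lemma nontriv: "0 \<le> (t::real) \<Longrightarrow> at t within {0..} \<noteq> bot"
proof (cases "t = 0")
  case True
  then show ?thesis using at_within_Ici_at_right[of "0::real"] by simp
next
  case False
  assume "0 \<le> t"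
  with False have "at t within {0..} = at t within UNIV"
    by (intro at_within_nhd[of t "{0<..}"]) auto
  then show ?thesis by simp
qed

context setting begin

lemma vd:
  assumes x: "cmod x \<le> R\<^sup>2" and t: "0 \<le> t"
  shows "vector_derivative (\<lambda>s. Fcoef f g \<alpha> x s) (at t within {0..}) = f \<alpha> t - lam \<alpha> * g x t * Fcoef f g \<alpha> x t"
  by (rule vector_derivative_within[OF nontriv[OF t] F_deriv[OF x t]])

lemma ens:
  fixes \<phi> :: "nat \<times> nat \<Rightarrow> 'b \<Rightarrow> real"
  assumes rho: "0 \<le> \<rho>" "\<rho> \<le> R" and C: "0 \<le> C" and bnd: "\<And>\<alpha> xt. xt \<in> D \<Longrightarrow> \<phi> \<alpha> xt \<le> C * sa \<alpha>"
  shows "(\<Sum>\<^sub>\<infinity>\<alpha>. (SUP xt\<in>D. ennreal (\<phi> \<alpha> xt)) * ennreal \<rho> ^ (fst \<alpha> + snd \<alpha>)) \<le> ennreal (C * M)"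
proof -
  let ?h = "\<lambda>\<alpha>. (SUP xt\<in>D. ennreal (\<phi> \<alpha> xt)) * ennreal \<rho> ^ (fst \<alpha> + snd \<alpha>)"
  have tm: "?h \<alpha> \<le> ennreal (C * (sa \<alpha> * R^(fst \<alpha>+snd \<alpha>)))" for \<alpha>
  proof -
    have "(SUP xt\<in>D. ennreal (\<phi> \<alpha> xt)) \<le> ennreal (C * sa \<alpha>)"
      by (rule SUP_least) (rule ennreal_leI, rule bnd)
    moreover have "ennreal \<rho> ^ (fst \<alpha> + snd \<alpha>) \<le> ennreal (R ^ (fst \<alpha> + snd \<alpha>))"
      using rho by (subst ennreal_power) (auto intro!: ennreal_leI power_mono)
    ultimately have "?h \<alpha> \<le> ennreal (C * sa \<alpha>) * ennreal (R ^ (fst \<alpha> + snd \<alpha>))"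
      by (rule mult_mono') auto
    also have "\<dots> = ennreal (C * (sa \<alpha> * R^(fst \<alpha>+snd \<alpha>)))"
      using C sa_nonneg[of \<alpha>] R by (simp add: ennreal_mult'[symmetric] mult.assoc)
    finally show ?thesis .
  qed
  have "infsum ?h UNIV = (SUP F\<in>{F. finite F \<and> F \<subseteq> UNIV}. sum ?h F)"
    by (rule nonneg_infsum_complete) auto
  also have "\<dots> \<le> ennreal (C * M)"
  proof (rule SUP_least)
    fix F assume "F \<in> {F. finite F \<and> F \<subseteq> (UNIV :: (nat\<times>nat) set)}"
    then have F: "finite F" by auto
    have "sum ?h F \<le> (\<Sum>\<alpha>\<in>F. ennreal (C * (sa \<alpha> * R^(fst \<alpha>+snd \<alpha>))))"
      by (rule sum_mono) (rule tm)
    also have "\<dots> = ennreal (\<Sum>\<alpha>\<in>F. C * (sa \<alpha> * R^(fst \<alpha>+snd \<alpha>)))"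
      using C sa_nonneg R by (intro sum_ennreal) auto
    also have "\<dots> \<le> ennreal (C * M)"
      using b_fin_sum[OF F] C by (intro ennreal_leI) (simp add: sum_distrib_left[symmetric] mult_left_mono)
    finally show "sum ?h F \<le> ennreal (C * M)" .
  qed
  finally show ?thesis .
qed

end



lemma summable_norm_cmp:
  fixes c :: "'i \<Rightarrow> 'a::banach"
  assumes bnd: "\<And>\<alpha>. norm (c \<alpha>) \<le> B \<alpha>" and B: "B summable_on A"
  shows "c summable_on A" "(\<lambda>\<alpha>. norm (c \<alpha>)) summable_on A" "norm (infsum c A) \<le> infsum B A"
proof -
  show n: "(\<lambda>\<alpha>. norm (c \<alpha>)) summable_on A"
    using B bnd by (rule summable_on_comparison_test) auto
  then show "c summable_on A" using abs_summable_summable[of c A] by simp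
  have "norm (infsum c A) \<le> infsum (\<lambda>\<alpha>. norm (c \<alpha>)) A" using n by (rule norm_infsum_bound)
  also have "\<dots> \<le> infsum B A" using n B bnd by (rule infsum_mono)
  finally show "norm (infsum c A) \<le> infsum B A" .
qed

lemma ulim_infsum:
  fixes d :: "'i \<Rightarrow> 'b \<Rightarrow> 'a::banach"
  assumes bnd: "\<And>\<alpha> y. y \<in> S \<Longrightarrow> norm (d \<alpha> y) \<le> B \<alpha>" and B: "B summable_on UNIV"
  shows "uniform_limit S (\<lambda>X y. \<Sum>\<alpha>\<in>X. d \<alpha> y) (\<lambda>y. \<Sum>\<^sub>\<infinity>\<alpha>. d \<alpha> y) (finite_subsets_at_top UNIV)"
proof (rule uniform_limitI)
  fix e :: real assume e: "e > 0"
  have "\<forall>\<^sub>F X in finite_subsets_at_top UNIV. dist (sum B X) (infsum B UNIV) < e"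
    using infsum_tendsto[OF B] e tendsto_iff by blast
  moreover have "\<forall>\<^sub>F X in finite_subsets_at_top UNIV. finite X"
    by (simp add: eventually_finite_subsets_at_top_weakI)
  ultimately show "\<forall>\<^sub>F X in finite_subsets_at_top UNIV. \<forall>y\<in>S. dist (\<Sum>\<alpha>\<in>X. d \<alpha> y) (\<Sum>\<^sub>\<infinity>\<alpha>. d \<alpha> y) < e"
  proof eventually_elim
    case (elim X)
    have BX: "B summable_on (UNIV - X)" using B by (rule summable_on_subset_banach) auto
    have "infsum B UNIV = infsum B X + infsum B (UNIV - X)"
      using infsum_Un_disjoint[of B X "UNIV - X"] elim(2) BX by (auto simp: Un_absorb1)
    then have Bt: "infsum B (UNIV - X) < e"
      using elim(1) elim(2) by (simp add: dist_real_def abs_less_iff)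
    show ?case
    proof
      fix y assume y: "y \<in> S"
      have s1: "(\<lambda>\<alpha>. d \<alpha> y) summable_on UNIV" using summable_norm_cmp(1)[OF bnd[OF y] B] .
      have s2: "(\<lambda>\<alpha>. d \<alpha> y) summable_on (UNIV - X)" using summable_norm_cmp(1)[OF bnd[OF y] BX] .
      have "(\<Sum>\<^sub>\<infinity>\<alpha>. d \<alpha> y) = (\<Sum>\<alpha>\<in>X. d \<alpha> y) + (\<Sum>\<^sub>\<infinity>\<alpha>\<in>UNIV-X. d \<alpha> y)"
        using infsum_Un_disjoint[of "\<lambda>\<alpha>. d \<alpha> y" X "UNIV - X"] elim(2) s2 by (auto simp: Un_absorb1)
      then have "dist (\<Sum>\<alpha>\<in>X. d \<alpha> y) (\<Sum>\<^sub>\<infinity>\<alpha>. d \<alpha> y) = norm (\<Sum>\<^sub>\<infinity>\<alpha>\<in>UNIV-X. d \<alpha> y)"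
        by (simp add: dist_norm)
      also have "\<dots> \<le> infsum B (UNIV - X)" using summable_norm_cmp(3)[OF bnd[OF y] BX] .
      finally show "dist (\<Sum>\<alpha>\<in>X. d \<alpha> y) (\<Sum>\<^sub>\<infinity>\<alpha>. d \<alpha> y) < e" using Bt by linarith
    qed
  qed
qed

lemma onorm_scaleR_vec: "onorm (\<lambda>h::real. h *\<^sub>R (v::'a::real_normed_vector)) = norm v"
  using onorm_scaleR_left[of "\<lambda>h::real. h" v] by (simp add: onorm_id bounded_linear_ident)

lemma infsum_vderiv:
  fixes c c' :: "'i \<Rightarrow> real \<Rightarrow> 'a::banach"
  assumes S: "convex S" and t: "t \<in> S"
    and der: "\<And>\<alpha> s. s \<in> S \<Longrightarrow> (c \<alpha> has_vector_derivative c' \<alpha> s) (at s within S)"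
    and bnd: "\<And>\<alpha> s. s \<in> S \<Longrightarrow> norm (c' \<alpha> s) \<le> B \<alpha>"
    and B: "B summable_on UNIV"
    and csum: "\<And>s. s \<in> S \<Longrightarrow> (\<lambda>\<alpha>. c \<alpha> s) summable_on UNIV"
  shows "((\<lambda>s. \<Sum>\<^sub>\<infinity>\<alpha>. c \<alpha> s) has_vector_derivative (\<Sum>\<^sub>\<infinity>\<alpha>. c' \<alpha> t)) (at t within S)"
proof -
  define D where "D = (\<Sum>\<^sub>\<infinity>\<alpha>. c' \<alpha> t)"
  have Bnn: "0 \<le> B \<alpha>" for \<alpha> using bnd[OF t, of \<alpha>] norm_ge_zero order_trans by blast
  have c'sum: "(\<lambda>\<alpha>. c' \<alpha> t) summable_on UNIV" using summable_norm_cmp(1)[OF bnd[OF t] B] .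
  have lip: "norm (c \<alpha> y - c \<alpha> t) \<le> B \<alpha> * norm (y - t)" if y: "y \<in> S" for \<alpha> y
    using differentiable_bound[OF S, of "c \<alpha>" "\<lambda>s h. h *\<^sub>R c' \<alpha> s" "B \<alpha>" y t] der bnd y t
    by (auto simp: has_vector_derivative_def onorm_scaleR_vec)
  define d where "d \<alpha> y = (1 / norm (y - t)) *\<^sub>R (c \<alpha> y - (c \<alpha> t + (y - t) *\<^sub>R c' \<alpha> t))" for \<alpha> y
  have dbnd: "norm (d \<alpha> y) \<le> 2 * B \<alpha>" if y: "y \<in> S" for \<alpha> y
  proof (cases "y = t")
    case True then show ?thesis using Bnn[of \<alpha>] by (simp add: d_def)
  next
    case False
    have "norm (c \<alpha> y - (c \<alpha> t + (y - t) *\<^sub>R c' \<alpha> t)) \<le> norm (c \<alpha> y - c \<alpha> t) + norm ((y - t) *\<^sub>R c' \<alpha> t)"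
      by (metis diff_diff_eq norm_triangle_ineq4)
    also have "\<dots> \<le> B \<alpha> * norm (y - t) + norm (y - t) * B \<alpha>"
      using lip[OF y, of \<alpha>] bnd[OF t, of \<alpha>] by (intro add_mono) (auto intro: mult_left_mono)
    finally have "norm (c \<alpha> y - (c \<alpha> t + (y - t) *\<^sub>R c' \<alpha> t)) \<le> 2 * B \<alpha> * norm (y - t)" by simp
    then show ?thesis using False by (simp add: d_def divide_simps)
  qed
  have dlim: "(d \<alpha> \<longlongrightarrow> 0) (at t within S)" for \<alpha>
    using der[OF t, of \<alpha>] unfolding has_vector_derivative_def has_derivative_within d_def by simp
  have B2: "(\<lambda>\<alpha>. 2 * B \<alpha>) summable_on UNIV" using B by (rule summable_on_cmult_right)
  have ul: "uniform_limit S (\<lambda>X y. \<Sum>\<alpha>\<in>X. d \<alpha> y) (\<lambda>y. \<Sum>\<^sub>\<infinity>\<alpha>. d \<alpha> y) (finite_subsets_at_top UNIV)"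
    by (rule ulim_infsum[OF _ B2]) (rule dbnd)
  have lim: "((\<lambda>y. \<Sum>\<^sub>\<infinity>\<alpha>. d \<alpha> y) \<longlongrightarrow> 0) (at t within S)"
  proof (rule swap_uniform_limit[OF _ _ ul])
    show "\<forall>\<^sub>F X in finite_subsets_at_top UNIV. ((\<lambda>y. \<Sum>\<alpha>\<in>X. d \<alpha> y) \<longlongrightarrow> 0) (at t within S)"
      by (intro always_eventually allI tendsto_null_sum dlim)
  qed auto
  have eq: "(\<Sum>\<^sub>\<infinity>\<alpha>. d \<alpha> y) = (1 / norm (y - t)) *\<^sub>R ((\<Sum>\<^sub>\<infinity>\<alpha>. c \<alpha> y) - ((\<Sum>\<^sub>\<infinity>\<alpha>. c \<alpha> t) + (y - t) *\<^sub>R D))"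
    if y: "y \<in> S" for y
  proof -
    have h1: "((\<lambda>\<alpha>. c \<alpha> y) has_sum (\<Sum>\<^sub>\<infinity>\<alpha>. c \<alpha> y)) UNIV" using csum[OF y] by simp
    have h2: "((\<lambda>\<alpha>. c \<alpha> t) has_sum (\<Sum>\<^sub>\<infinity>\<alpha>. c \<alpha> t)) UNIV" using csum[OF t] by simp
    have h3: "((\<lambda>\<alpha>. (y - t) *\<^sub>R c' \<alpha> t) has_sum (y - t) *\<^sub>R D) UNIV"
      unfolding D_def using c'sum by (intro has_sum_scaleR) simp
    have h4: "((\<lambda>\<alpha>. c \<alpha> t + (y - t) *\<^sub>R c' \<alpha> t) has_sum ((\<Sum>\<^sub>\<infinity>\<alpha>. c \<alpha> t) + (y - t) *\<^sub>R D)) UNIV"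
      by (rule has_sum_add[OF h2 h3])
    have h5: "((\<lambda>\<alpha>. - (c \<alpha> t + (y - t) *\<^sub>R c' \<alpha> t)) has_sum - ((\<Sum>\<^sub>\<infinity>\<alpha>. c \<alpha> t) + (y - t) *\<^sub>R D)) UNIV"
      using h4 has_sum_uminus[where f="\<lambda>\<alpha>. c \<alpha> t + (y - t) *\<^sub>R c' \<alpha> t" and a="- ((\<Sum>\<^sub>\<infinity>\<alpha>. c \<alpha> t) + (y - t) *\<^sub>R D)" and A=UNIV]
      by (simp only: minus_minus)
    have h6: "((\<lambda>\<alpha>. c \<alpha> y - (c \<alpha> t + (y - t) *\<^sub>R c' \<alpha> t)) has_sum
        ((\<Sum>\<^sub>\<infinity>\<alpha>. c \<alpha> y) - ((\<Sum>\<^sub>\<infinity>\<alpha>. c \<alpha> t) + (y - t) *\<^sub>R D))) UNIV"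
      using has_sum_add[OF h1 h5] by (simp only: diff_conv_add_uminus)
    show ?thesis unfolding d_def by (rule infsumI) (rule has_sum_scaleR[OF h6])
  qed
  have "((\<lambda>y. (1 / norm (y - t)) *\<^sub>R ((\<Sum>\<^sub>\<infinity>\<alpha>. c \<alpha> y) - ((\<Sum>\<^sub>\<infinity>\<alpha>. c \<alpha> t) + (y - t) *\<^sub>R D))) \<longlongrightarrow> 0) (at t within S)"
  proof (rule Lim_transform_eventually[OF lim])
    show "\<forall>\<^sub>F y in at t within S. (\<Sum>\<^sub>\<infinity>\<alpha>. d \<alpha> y) = (1 / norm (y - t)) *\<^sub>R ((\<Sum>\<^sub>\<infinity>\<alpha>. c \<alpha> y) - ((\<Sum>\<^sub>\<infinity>\<alpha>. c \<alpha> t) + (y - t) *\<^sub>R D))"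
      unfolding eventually_at_filter by (intro always_eventually) (auto simp: eq)
  qed
  then show ?thesis unfolding has_vector_derivative_def has_derivative_within D_def
    by (simp add: bounded_linear_scaleR_left)
qed

lemma infsum_cderiv:
  fixes c c' :: "'i \<Rightarrow> complex \<Rightarrow> complex"
  assumes r: "0 < r"
    and der: "\<And>\<alpha> w. w \<in> cball z r \<Longrightarrow> (c \<alpha> has_field_derivative c' \<alpha> w) (at w)"
    and bnd: "\<And>\<alpha> w. w \<in> cball z r \<Longrightarrow> norm (c \<alpha> w) \<le> B \<alpha>"
    and B: "B summable_on UNIV"
  obtains D where "((\<lambda>w. \<Sum>\<^sub>\<infinity>\<alpha>. c \<alpha> w) has_field_derivative D) (at z)"
    "((\<lambda>X. \<Sum>\<alpha>\<in>X. c' \<alpha> z) \<longlongrightarrow> D) (finite_subsets_at_top UNIV)"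
proof -
  have cont: "continuous_on (cball z r) (c \<alpha>)" for \<alpha>
    using der DERIV_isCont continuous_at_imp_continuous_on by blast
  have ul: "uniform_limit (cball z r) (\<lambda>X w. \<Sum>\<alpha>\<in>X. c \<alpha> w) (\<lambda>w. \<Sum>\<^sub>\<infinity>\<alpha>. c \<alpha> w) (finite_subsets_at_top UNIV)"
    by (rule ulim_infsum[OF _ B]) (rule bnd)
  obtain g' where g': "\<And>w. w \<in> ball z r \<Longrightarrow> ((\<lambda>w. \<Sum>\<^sub>\<infinity>\<alpha>. c \<alpha> w) has_field_derivative (g' w)) (at w) \<and>
      ((\<lambda>X. \<Sum>\<alpha>\<in>X. c' \<alpha> w) \<longlongrightarrow> g' w) (finite_subsets_at_top UNIV)"
  proof (rule has_complex_derivative_uniform_limit[OF _ ul _ r])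
    show "\<forall>\<^sub>F X in finite_subsets_at_top UNIV. continuous_on (cball z r) (\<lambda>w. \<Sum>\<alpha>\<in>X. c \<alpha> w) \<and>
        (\<forall>w\<in>ball z r. ((\<lambda>w. \<Sum>\<alpha>\<in>X. c \<alpha> w) has_field_derivative (\<Sum>\<alpha>\<in>X. c' \<alpha> w)) (at w))"
      using cont der by (intro always_eventually allI conjI ballI continuous_on_sum DERIV_sum) auto
  qed auto
  have "z \<in> ball z r" using r by simp
  from g'[OF this] show ?thesis using that by blast
qed




lemma pow_pred_mult: "of_nat n * (w::complex) ^ (n - 1) * w = of_nat n * w ^ n"
  by (cases n) auto

lemma term_id:
  fixes D F p q :: complex
  shows "q * (D * p * p ^ a * q ^ b + F * p ^ a * (of_nat b * q ^ (b - 1)))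
       - p * (D * q * p ^ a * q ^ b + F * (of_nat a * p ^ (a - 1)) * q ^ b)
       = lam (a, b) * F * p ^ a * q ^ b"
  by (cases a; cases b) (simp_all add: lam_def algebra_simps)

context setting begin

lemma term_bound:
  assumes X: "cmod X \<le> K * sa \<alpha>" and p: "cmod p \<le> R" and q: "cmod q \<le> R"
  shows "cmod (X * p ^ fst \<alpha> * q ^ snd \<alpha>) \<le> K * (sa \<alpha> * R ^ (fst \<alpha> + snd \<alpha>))"
proof -
  have "cmod (X * p ^ fst \<alpha> * q ^ snd \<alpha>) = cmod X * (cmod p ^ fst \<alpha> * cmod q ^ snd \<alpha>)"
    by (simp add: norm_mult norm_power)
  also have "\<dots> \<le> (K * sa \<alpha>) * (R ^ fst \<alpha> * R ^ snd \<alpha>)"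
    using X p q R order_trans[OF norm_ge_zero X] by (intro mult_mono power_mono) auto
  also have "\<dots> = K * (sa \<alpha> * R ^ (fst \<alpha> + snd \<alpha>))" by (simp add: power_add)
  finally show ?thesis .
qed

definition Dx where "Dx \<alpha> x t = deriv (\<lambda>x. Fcoef f g \<alpha> x t) x"

lemma Fx_deriv:
  assumes "0 \<le> t" "cmod x < R\<^sup>2"
  shows "((\<lambda>x. Fcoef f g \<alpha> x t) has_field_derivative Dx \<alpha> x t) (at x)"
  unfolding Dx_def using assms by (intro holomorphic_derivI[OF F_holo]) auto

lemma cp_deriv:
  assumes t: "0 \<le> t" and wq: "cmod (w * q) < R\<^sup>2"
  shows "((\<lambda>w. Fcoef f g \<alpha> (w * q) t * w ^ fst \<alpha> * q ^ snd \<alpha>) has_field_derivative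
     (Dx \<alpha> (w * q) t * q * w ^ fst \<alpha> * q ^ snd \<alpha> + Fcoef f g \<alpha> (w * q) t * (of_nat (fst \<alpha>) * w ^ (fst \<alpha> - 1)) * q ^ snd \<alpha>)) (at w)"
proof -
  have h1: "((\<lambda>w. Fcoef f g \<alpha> (w * q) t) has_field_derivative Dx \<alpha> (w * q) t * q) (at w)"
  proof -
    have "((\<lambda>w. w * q) has_field_derivative q) (at w)" by (auto intro!: derivative_eq_intros)
    from DERIV_chain[where f="\<lambda>x. Fcoef f g \<alpha> x t" and g="\<lambda>w. w * q" and x=w and s=UNIV, OF Fx_deriv[OF t wq, of \<alpha>] this]
    show ?thesis by (simp add: o_def)
  qed
  show ?thesis
    by (rule DERIV_cong, (rule derivative_intros h1)+) (simp add: algebra_simps)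
qed

lemma cq_deriv:
  assumes t: "0 \<le> t" and wq: "cmod (p * w) < R\<^sup>2"
  shows "((\<lambda>w. Fcoef f g \<alpha> (p * w) t * p ^ fst \<alpha> * w ^ snd \<alpha>) has_field_derivative
     (Dx \<alpha> (p * w) t * p * p ^ fst \<alpha> * w ^ snd \<alpha> + Fcoef f g \<alpha> (p * w) t * p ^ fst \<alpha> * (of_nat (snd \<alpha>) * w ^ (snd \<alpha> - 1)))) (at w)"
proof -
  have h1: "((\<lambda>w. Fcoef f g \<alpha> (p * w) t) has_field_derivative Dx \<alpha> (p * w) t * p) (at w)"
  proof -
    have "((\<lambda>w. p * w) has_field_derivative p) (at w)" by (auto intro!: derivative_eq_intros)
    from DERIV_chain[where f="\<lambda>x. Fcoef f g \<alpha> x t" and g="\<lambda>w. p * w" and x=w and s=UNIV, OF Fx_deriv[OF t wq, of \<alpha>] this]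
    show ?thesis by (simp add: o_def)
  qed
  show ?thesis
    by (rule DERIV_cong, (rule derivative_intros h1)+) (simp add: algebra_simps)
qed

end



context setting begin

lemma ar:
  assumes "0 < \<delta>" "\<delta> < 1"
  shows "2/\<omega>*M \<le> 4*M/(\<omega>*\<delta>\<^sup>2)" "4*M \<le> 4*M/(\<omega>*\<delta>\<^sup>2)"
proof -
  have d2: "0 < \<delta>\<^sup>2" "\<delta>\<^sup>2 \<le> 1" using assms by (auto simp: power_le_one)
  have w: "0 < \<omega> * \<delta>\<^sup>2" "\<omega> * \<delta>\<^sup>2 \<le> 1" using \<omega> d2 by (auto intro: mult_le_one)
  show "4*M \<le> 4*M/(\<omega>*\<delta>\<^sup>2)" using w M by (simp add: le_divide_eq mult_left_le)
  have "2/\<omega>*M \<le> 4*M/\<omega>" using M \<omega> by (simp add: divide_simps)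
  also have "4*M/\<omega> \<le> 4*M/(\<omega>*\<delta>\<^sup>2)"
    using M \<omega> d2 by (intro divide_left_mono) (auto intro: mult_left_le)
  finally show "2/\<omega>*M \<le> 4*M/(\<omega>*\<delta>\<^sup>2)" .
qed

lemma part1:
  assumes "0 < \<delta>" "\<delta> < 1"
  shows "(\<Sum>\<^sub>\<infinity>\<alpha>. (SUP xt\<in>{(x, t). cmod x \<le> R\<^sup>2 \<and> 0 \<le> t}.
                         ennreal (cmod (Fcoef f g \<alpha> (fst xt) (snd xt))))
                      * ennreal ((1 - \<delta>) * R) ^ (fst \<alpha> + snd \<alpha>))
              \<le> ennreal (4 * M / (\<omega> * \<delta>\<^sup>2))"
proof -
  have "(\<Sum>\<^sub>\<infinity>\<alpha>. (SUP xt\<in>{(x, t). cmod x \<le> R\<^sup>2 \<and> 0 \<le> t}.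
                         ennreal (cmod (Fcoef f g \<alpha> (fst xt) (snd xt))))
                      * ennreal ((1 - \<delta>) * R) ^ (fst \<alpha> + snd \<alpha>)) \<le> ennreal (2/\<omega> * M)"
  proof (rule ens)
    show "cmod (Fcoef f g \<alpha> (fst xt) (snd xt)) \<le> 2/\<omega> * sa \<alpha>"
      if "xt \<in> {(x, t). cmod x \<le> R\<^sup>2 \<and> 0 \<le> t}" for \<alpha> xt
      using F_abs_bound[of "fst xt" "snd xt" \<alpha>] that by (auto simp: case_prod_beta)
  qed (use assms R \<omega> in auto)
  also have "\<dots> \<le> ennreal (4 * M / (\<omega> * \<delta>\<^sup>2))" using ar[OF assms] by (intro ennreal_leI) auto
  finally show ?thesis .
qed

lemma part2:
  assumes "0 < \<delta>" "\<delta> < 1"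
  shows "(\<Sum>\<^sub>\<infinity>\<alpha>. (SUP xt\<in>{(x, t). cmod x \<le> R\<^sup>2 \<and> 0 \<le> t}.
                         ennreal (cmod (vector_derivative (\<lambda>s. Fcoef f g \<alpha> (fst xt) s)
                                          (at (snd xt) within {0..}))))
                      * ennreal ((1 - \<delta>) * R) ^ (fst \<alpha> + snd \<alpha>))
              \<le> ennreal (4 * M / (\<omega> * \<delta>\<^sup>2))"
proof -
  have "(\<Sum>\<^sub>\<infinity>\<alpha>. (SUP xt\<in>{(x, t). cmod x \<le> R\<^sup>2 \<and> 0 \<le> t}.
                         ennreal (cmod (vector_derivative (\<lambda>s. Fcoef f g \<alpha> (fst xt) s)
                                          (at (snd xt) within {0..}))))
                      * ennreal ((1 - \<delta>) * R) ^ (fst \<alpha> + snd \<alpha>)) \<le> ennreal (4 * M)"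
  proof (rule ens)
    show "cmod (vector_derivative (\<lambda>s. Fcoef f g \<alpha> (fst xt) s) (at (snd xt) within {0..})) \<le> 4 * sa \<alpha>"
      if "xt \<in> {(x, t). cmod x \<le> R\<^sup>2 \<and> 0 \<le> t}" for \<alpha> xt
      using vd[of "fst xt" "snd xt" \<alpha>] dF_bound[of "fst xt" "snd xt" \<alpha>] that by (auto simp: case_prod_beta)
  qed (use assms R in auto)
  also have "\<dots> \<le> ennreal (4 * M / (\<omega> * \<delta>\<^sup>2))" using ar[OF assms] by (intro ennreal_leI) auto
  finally show ?thesis .
qed

end



context setting begin

lemma bnd_gen:
  assumes x: "cmod x \<le> R\<^sup>2" and s: "0 \<le> s" and u: "cmod u \<le> R" and v: "cmod v \<le> R"
  shows "cmod (Fcoef f g \<alpha> x s * u ^ fst \<alpha> * v ^ snd \<alpha>) \<le> 2/\<omega> * (sa \<alpha> * R ^ (fst \<alpha> + snd \<alpha>))"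
  by (rule term_bound[OF _ u v]) (use F_abs_bound[OF x s, of \<alpha>] in simp)

lemma bnd_gen4:
  assumes x: "cmod x \<le> R\<^sup>2" and s: "0 \<le> s" and u: "cmod u \<le> R" and v: "cmod v \<le> R"
  shows "cmod (vector_derivative (\<lambda>s. Fcoef f g \<alpha> x s) (at s within {0..}) * u ^ fst \<alpha> * v ^ snd \<alpha>)
     \<le> 4 * (sa \<alpha> * R ^ (fst \<alpha> + snd \<alpha>))"
  by (rule term_bound[OF _ u v]) (use dF_bound[OF x s, of \<alpha>] vd[OF x s, of \<alpha>] in simp)

lemma bnd_lam:
  assumes x: "cmod x \<le> R\<^sup>2" and s: "0 \<le> s" and u: "cmod u \<le> R" and v: "cmod v \<le> R"
  shows "cmod (lam \<alpha> * Fcoef f g \<alpha> x s * u ^ fst \<alpha> * v ^ snd \<alpha>) \<le> 2/\<omega> * (sa \<alpha> * R ^ (fst \<alpha> + snd \<alpha>))"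
  by (rule term_bound[OF _ u v]) (use F_bound[OF x s, of \<alpha>] in \<open>simp add: norm_mult\<close>)

lemma B_sum:
  assumes "0 \<le> K"
  shows "(\<lambda>\<alpha>. K * (sa \<alpha> * R ^ (fst \<alpha> + snd \<alpha>))) summable_on UNIV"
    "(\<Sum>\<^sub>\<infinity>\<alpha>. K * (sa \<alpha> * R ^ (fst \<alpha> + snd \<alpha>))) \<le> K * M"
proof -
  show "(\<lambda>\<alpha>. K * (sa \<alpha> * R ^ (fst \<alpha> + snd \<alpha>))) summable_on UNIV"
    using b_summable by (rule summable_on_cmult_right)
  have "(\<Sum>\<^sub>\<infinity>\<alpha>. K * (sa \<alpha> * R ^ (fst \<alpha> + snd \<alpha>))) = K * (\<Sum>\<^sub>\<infinity>\<alpha>. sa \<alpha> * R ^ (fst \<alpha> + snd \<alpha>))"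
    using b_summable by (intro infsum_cmult_right) auto
  also have "\<dots> \<le> K * M" using b_infsum assms by (rule mult_left_mono)
  finally show "(\<Sum>\<^sub>\<infinity>\<alpha>. K * (sa \<alpha> * R ^ (fst \<alpha> + snd \<alpha>))) \<le> K * M" .
qed

lemma part3:
  assumes d: "0 < \<delta>" "\<delta> < 1" and p: "cmod p \<le> (1 - \<delta>) * R" and q: "cmod q \<le> (1 - \<delta>) * R"
    and t: "0 \<le> t"
  shows "let dchi = (\<Sum>\<^sub>\<infinity>\<alpha>. vector_derivative (\<lambda>s. Fcoef f g \<alpha> (p * q) s)
                                      (at t within {0..}) * p ^ fst \<alpha> * q ^ snd \<alpha>)
                in (\<lambda>\<alpha>. Fcoef f g \<alpha> (p * q) t * p ^ fst \<alpha> * q ^ snd \<alpha>) summable_on UNIV \<and>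
                   cmod (chi f g p q t) \<le> 4 * M / (\<omega> * \<delta>\<^sup>2) \<and>
                   (\<lambda>\<alpha>. vector_derivative (\<lambda>s. Fcoef f g \<alpha> (p * q) s) (at t within {0..})
                         * p ^ fst \<alpha> * q ^ snd \<alpha>) summable_on UNIV \<and>
                   cmod dchi \<le> 4 * M / (\<omega> * \<delta>\<^sup>2) \<and>
                   ((\<lambda>s. chi f g p q s) has_vector_derivative dchi) (at t within {0..}) \<and>
                   (\<exists>dp dq. ((\<lambda>p'. chi f g p' q t) has_field_derivative dp) (at p) \<and>
                            ((\<lambda>q'. chi f g p q' t) has_field_derivative dq) (at q) \<and>
                            g (p * q) t * (q * dq - p * dp) + dchi = taylor_eval f p q t)"
proof -
  define dchi where "dchi = (\<Sum>\<^sub>\<infinity>\<alpha>. vector_derivative (\<lambda>s. Fcoef f g \<alpha> (p * q) s)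
                                      (at t within {0..}) * p ^ fst \<alpha> * q ^ snd \<alpha>)"
  let ?b = "\<lambda>\<alpha>. sa \<alpha> * R ^ (fst \<alpha> + snd \<alpha>)"
  have pR: "cmod p \<le> R" using p d R by (smt (verit) mult_le_cancel_right1)
  have qR: "cmod q \<le> R" using q d R by (smt (verit) mult_le_cancel_right1)
  have pqR: "cmod (p * q) \<le> R\<^sup>2"
    using pR qR mult_mono[OF pR qR] R by (simp add: norm_mult power2_eq_square)
  have w2: "0 \<le> 2 / \<omega>" using \<omega> by simp
  note B1 = B_sum[OF w2] and B4 = B_sum[of 4, simplified]
  have ar1: "2 / \<omega> * M \<le> 4 * M / (\<omega> * \<delta>\<^sup>2)" and ar4: "4 * M \<le> 4 * M / (\<omega> * \<delta>\<^sup>2)"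
    using ar[OF d] by auto
  have T1: "(\<lambda>\<alpha>. Fcoef f g \<alpha> (p * q) s * p ^ fst \<alpha> * q ^ snd \<alpha>) summable_on UNIV"
    "cmod (\<Sum>\<^sub>\<infinity>\<alpha>. Fcoef f g \<alpha> (p * q) s * p ^ fst \<alpha> * q ^ snd \<alpha>) \<le> 2 / \<omega> * M"
    if s: "0 \<le> s" for s
  proof -
    have bb: "cmod (Fcoef f g \<alpha> (p * q) s * p ^ fst \<alpha> * q ^ snd \<alpha>) \<le> 2/\<omega> * ?b \<alpha>" for \<alpha>
      by (rule bnd_gen[OF pqR s pR qR])
    show "(\<lambda>\<alpha>. Fcoef f g \<alpha> (p * q) s * p ^ fst \<alpha> * q ^ snd \<alpha>) summable_on UNIV"
      using summable_norm_cmp(1)[OF bb B1(1)] .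
    show "cmod (\<Sum>\<^sub>\<infinity>\<alpha>. Fcoef f g \<alpha> (p * q) s * p ^ fst \<alpha> * q ^ snd \<alpha>) \<le> 2 / \<omega> * M"
      using summable_norm_cmp(3)[OF bb B1(1)] B1(2) by linarith
  qed
  have chi_eq: "chi f g p q s = (\<Sum>\<^sub>\<infinity>\<alpha>. Fcoef f g \<alpha> (p * q) s * p ^ fst \<alpha> * q ^ snd \<alpha>)" for s
    by (simp add: chi_def)
  have bb4: "cmod (vector_derivative (\<lambda>s. Fcoef f g \<alpha> (p * q) s) (at s within {0..}) * p ^ fst \<alpha> * q ^ snd \<alpha>)
       \<le> 4 * ?b \<alpha>" if s: "0 \<le> s" for \<alpha> s
    by (rule bnd_gen4[OF pqR s pR qR])
  have T2: "(\<lambda>\<alpha>. vector_derivative (\<lambda>s. Fcoef f g \<alpha> (p * q) s) (at t within {0..})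
                         * p ^ fst \<alpha> * q ^ snd \<alpha>) summable_on UNIV"
    using summable_norm_cmp(1)[OF bb4[OF t] B4(1)] .
  have T2n: "cmod dchi \<le> 4 * M"
    unfolding dchi_def using summable_norm_cmp(3)[OF bb4[OF t] B4(1)] B4(2) by linarith
  have VD: "((\<lambda>s. chi f g p q s) has_vector_derivative dchi) (at t within {0..})"
    unfolding chi_eq dchi_def
  proof (rule infsum_vderiv[OF _ _ _ bb4 B4(1)])
    show "((\<lambda>s. Fcoef f g \<alpha> (p * q) s * p ^ fst \<alpha> * q ^ snd \<alpha>) has_vector_derivative
        vector_derivative (\<lambda>s. Fcoef f g \<alpha> (p * q) s) (at s within {0..}) * p ^ fst \<alpha> * q ^ snd \<alpha>)
        (at s within {0..})" if s: "s \<in> {0..}" for \<alpha> s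
    proof -
      have s0: "0 \<le> s" using s by simp
      show ?thesis
        unfolding vd[OF pqR s0]
        by (intro has_vector_derivative_mult_left F_deriv[OF pqR s0])
    qed
  qed (use t T1 in auto)
  define r where "r = \<delta> * R / 2"
  have r: "0 < r" using d R by (simp add: r_def)
  have qlt: "cmod q < R" using q d R by (smt (verit) mult_less_cancel_right2)
  have plt: "cmod p < R" using p d R by (smt (verit) mult_less_cancel_right2)
  have ball_lt: "cmod w < R" if "w \<in> cball z r" "cmod z \<le> (1 - \<delta>) * R" for w z
  proof -
    have "cmod w \<le> cmod z + dist z w" using norm_triangle_sub[of w z] by (simp add: dist_norm norm_minus_commute)
    also have "\<dots> \<le> (1 - \<delta>) * R + r" using that by auto
    also have "\<dots> < R" using d R by (simp add: r_def algebra_simps)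
    finally show ?thesis .
  qed
  have prod_lt: "cmod (u * v) < R\<^sup>2" if "cmod u < R" "cmod v < R" for u v
  proof -
    have "cmod u * cmod v \<le> cmod u * R" using that by (intro mult_left_mono) auto
    also have "\<dots> < R * R" using that R by (intro mult_strict_right_mono) auto
    finally show ?thesis by (simp add: norm_mult power2_eq_square)
  qed
  let ?cp = "\<lambda>\<alpha> w. Dx \<alpha> (w * q) t * q * w ^ fst \<alpha> * q ^ snd \<alpha> + Fcoef f g \<alpha> (w * q) t * (of_nat (fst \<alpha>) * w ^ (fst \<alpha> - 1)) * q ^ snd \<alpha>"
  let ?cq = "\<lambda>\<alpha> w. Dx \<alpha> (p * w) t * p * p ^ fst \<alpha> * w ^ snd \<alpha> + Fcoef f g \<alpha> (p * w) t * p ^ fst \<alpha> * (of_nat (snd \<alpha>) * w ^ (snd \<alpha> - 1))"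
  obtain dp where dp: "((\<lambda>w. \<Sum>\<^sub>\<infinity>\<alpha>. Fcoef f g \<alpha> (w * q) t * w ^ fst \<alpha> * q ^ snd \<alpha>) has_field_derivative dp) (at p)"
    "((\<lambda>X. \<Sum>\<alpha>\<in>X. ?cp \<alpha> p) \<longlongrightarrow> dp) (finite_subsets_at_top UNIV)"
  proof (rule infsum_cderiv[OF r _ _ B1(1)])
    fix \<alpha> w assume w: "w \<in> cball p r"
    have wl: "cmod w < R" using ball_lt[OF w p] .
    show "((\<lambda>w. Fcoef f g \<alpha> (w * q) t * w ^ fst \<alpha> * q ^ snd \<alpha>) has_field_derivative ?cp \<alpha> w) (at w)"
      using cp_deriv[OF t prod_lt[OF wl qlt]] .
    show "cmod (Fcoef f g \<alpha> (w * q) t * w ^ fst \<alpha> * q ^ snd \<alpha>) \<le> 2/\<omega> * ?b \<alpha>"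
      using bnd_gen[OF less_imp_le[OF prod_lt[OF wl qlt]] t less_imp_le[OF wl] qR] .
  qed
  obtain dq where dq: "((\<lambda>w. \<Sum>\<^sub>\<infinity>\<alpha>. Fcoef f g \<alpha> (p * w) t * p ^ fst \<alpha> * w ^ snd \<alpha>) has_field_derivative dq) (at q)"
    "((\<lambda>X. \<Sum>\<alpha>\<in>X. ?cq \<alpha> q) \<longlongrightarrow> dq) (finite_subsets_at_top UNIV)"
  proof (rule infsum_cderiv[OF r _ _ B1(1)])
    fix \<alpha> w assume w: "w \<in> cball q r"
    have wl: "cmod w < R" using ball_lt[OF w q] .
    show "((\<lambda>w. Fcoef f g \<alpha> (p * w) t * p ^ fst \<alpha> * w ^ snd \<alpha>) has_field_derivative ?cq \<alpha> w) (at w)"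
      using cq_deriv[OF t prod_lt[OF plt wl]] .
    show "cmod (Fcoef f g \<alpha> (p * w) t * p ^ fst \<alpha> * w ^ snd \<alpha>) \<le> 2/\<omega> * ?b \<alpha>"
      using bnd_gen[OF less_imp_le[OF prod_lt[OF plt wl]] t pR less_imp_le[OF wl]] .
  qed
  let ?L = "\<lambda>\<alpha>. lam \<alpha> * Fcoef f g \<alpha> (p * q) t * p ^ fst \<alpha> * q ^ snd \<alpha>"
  have Lsum: "?L summable_on UNIV"
    using summable_norm_cmp(1)[OF bnd_lam[OF pqR t pR qR] B1(1)] .
  have lim1: "((\<lambda>X. q * (\<Sum>\<alpha>\<in>X. ?cq \<alpha> q) - p * (\<Sum>\<alpha>\<in>X. ?cp \<alpha> p)) \<longlongrightarrow> q * dq - p * dp) (finite_subsets_at_top UNIV)"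
    by (intro tendsto_intros dp(2) dq(2))
  have eqX: "q * (\<Sum>\<alpha>\<in>X. ?cq \<alpha> q) - p * (\<Sum>\<alpha>\<in>X. ?cp \<alpha> p) = (\<Sum>\<alpha>\<in>X. ?L \<alpha>)" for X
  proof -
    have "q * (\<Sum>\<alpha>\<in>X. ?cq \<alpha> q) - p * (\<Sum>\<alpha>\<in>X. ?cp \<alpha> p) = (\<Sum>\<alpha>\<in>X. q * ?cq \<alpha> q - p * ?cp \<alpha> p)"
      by (simp add: sum_distrib_left sum_subtractf)
    also have "\<dots> = (\<Sum>\<alpha>\<in>X. ?L \<alpha>)"
    proof (rule sum.cong)
      fix \<alpha> :: "nat \<times> nat"
      obtain a b where ab: "\<alpha> = (a, b)" by (cases \<alpha>)
      show "q * ?cq \<alpha> q - p * ?cp \<alpha> p = ?L \<alpha>"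
        unfolding ab using term_id[of q "Dx (a, b) (p * q) t" p a b "Fcoef f g (a, b) (p * q) t"]
        by (simp add: mult.commute[of q p])
    qed simp
    finally show ?thesis .
  qed
  have lim2: "((\<lambda>X. \<Sum>\<alpha>\<in>X. ?L \<alpha>) \<longlongrightarrow> (\<Sum>\<^sub>\<infinity>\<alpha>. ?L \<alpha>)) (finite_subsets_at_top UNIV)"
    using infsum_tendsto[OF Lsum] .
  have key: "q * dq - p * dp = (\<Sum>\<^sub>\<infinity>\<alpha>. ?L \<alpha>)"
    using tendsto_unique[OF finite_subsets_at_top_neq_bot lim1[unfolded eqX] lim2] .
  have final: "g (p * q) t * (q * dq - p * dp) + dchi = taylor_eval f p q t"
  proof -
    have "g (p * q) t * (q * dq - p * dp) + dchi = (\<Sum>\<^sub>\<infinity>\<alpha>. g (p * q) t * ?L \<alpha>) + dchi"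
      unfolding key using Lsum by (simp add: infsum_cmult_right)
    also have "\<dots> = (\<Sum>\<^sub>\<infinity>\<alpha>. g (p * q) t * ?L \<alpha> +
        vector_derivative (\<lambda>s. Fcoef f g \<alpha> (p * q) s) (at t within {0..}) * p ^ fst \<alpha> * q ^ snd \<alpha>)"
      unfolding dchi_def
      by (rule infsum_add[symmetric]) (use Lsum T2 summable_on_cmult_right in auto)
    also have "\<dots> = (\<Sum>\<^sub>\<infinity>\<alpha>. f \<alpha> t * p ^ fst \<alpha> * q ^ snd \<alpha>)"
      by (rule infsum_cong) (simp add: vd[OF pqR t] algebra_simps)
    finally show ?thesis by (simp add: taylor_eval_def)
  qed
  show ?thesis
    unfolding Let_def dchi_def[symmetric]
  proof (intro conjI)
    show "(\<lambda>\<alpha>. Fcoef f g \<alpha> (p * q) t * p ^ fst \<alpha> * q ^ snd \<alpha>) summable_on UNIV" using T1(1)[OF t] .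
    show "cmod (chi f g p q t) \<le> 4 * M / (\<omega> * \<delta>\<^sup>2)" using T1(2)[OF t] ar1 by (simp add: chi_eq)
    show "(\<lambda>\<alpha>. vector_derivative (\<lambda>s. Fcoef f g \<alpha> (p * q) s) (at t within {0..})
                         * p ^ fst \<alpha> * q ^ snd \<alpha>) summable_on UNIV" using T2 .
    show "cmod dchi \<le> 4 * M / (\<omega> * \<delta>\<^sup>2)" using T2n ar4 by linarith
    show "((\<lambda>s. chi f g p q s) has_vector_derivative dchi) (at t within {0..})" using VD .
    show "\<exists>dp dq. ((\<lambda>p'. chi f g p' q t) has_field_derivative dp) (at p) \<and>
                            ((\<lambda>q'. chi f g p q' t) has_field_derivative dq) (at q) \<and>
                            g (p * q) t * (q * dq - p * dp) + dchi = taylor_eval f p q t"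
      using dp(1) dq(1) final by (auto simp: chi_def)
  qed
qed

end



context setting begin

lemma main:
  shows "(\<forall>\<alpha> x t. cmod x \<le> R\<^sup>2 \<and> 0 \<le> t \<longrightarrow>
            (\<lambda>s. Fcoef f g \<alpha> x s) differentiable (at t within {0..})) \<and>
         (\<forall>\<delta>::real. 0 < \<delta> \<and> \<delta> < 1 \<longrightarrow>
            (\<Sum>\<^sub>\<infinity>\<alpha>. (SUP xt\<in>{(x, t). cmod x \<le> R\<^sup>2 \<and> 0 \<le> t}.
                         ennreal (cmod (Fcoef f g \<alpha> (fst xt) (snd xt))))
                      * ennreal ((1 - \<delta>) * R) ^ (fst \<alpha> + snd \<alpha>))
              \<le> ennreal (4 * M / (\<omega> * \<delta>\<^sup>2)) \<and>
            (\<Sum>\<^sub>\<infinity>\<alpha>. (SUP xt\<in>{(x, t). cmod x \<le> R\<^sup>2 \<and> 0 \<le> t}.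
                         ennreal (cmod (vector_derivative (\<lambda>s. Fcoef f g \<alpha> (fst xt) s)
                                          (at (snd xt) within {0..}))))
                      * ennreal ((1 - \<delta>) * R) ^ (fst \<alpha> + snd \<alpha>))
              \<le> ennreal (4 * M / (\<omega> * \<delta>\<^sup>2)) \<and>
            (\<forall>p q t. cmod p \<le> (1 - \<delta>) * R \<and> cmod q \<le> (1 - \<delta>) * R \<and> 0 \<le> t \<longrightarrow>
               (let dchi = (\<Sum>\<^sub>\<infinity>\<alpha>. vector_derivative (\<lambda>s. Fcoef f g \<alpha> (p * q) s)
                                      (at t within {0..}) * p ^ fst \<alpha> * q ^ snd \<alpha>)
                in (\<lambda>\<alpha>. Fcoef f g \<alpha> (p * q) t * p ^ fst \<alpha> * q ^ snd \<alpha>) summable_on UNIV \<and>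
                   cmod (chi f g p q t) \<le> 4 * M / (\<omega> * \<delta>\<^sup>2) \<and>
                   (\<lambda>\<alpha>. vector_derivative (\<lambda>s. Fcoef f g \<alpha> (p * q) s) (at t within {0..})
                         * p ^ fst \<alpha> * q ^ snd \<alpha>) summable_on UNIV \<and>
                   cmod dchi \<le> 4 * M / (\<omega> * \<delta>\<^sup>2) \<and>
                   ((\<lambda>s. chi f g p q s) has_vector_derivative dchi) (at t within {0..}) \<and>
                   (\<exists>dp dq. ((\<lambda>p'. chi f g p' q t) has_field_derivative dp) (at p) \<and>
                            ((\<lambda>q'. chi f g p q' t) has_field_derivative dq) (at q) \<and>
                            g (p * q) t * (q * dq - p * dp) + dchi = taylor_eval f p q t))))"
proof (intro conjI allI impI)
  fix \<alpha> :: "nat \<times> nat" and x :: complex and t :: real assume "cmod x \<le> R\<^sup>2 \<and> 0 \<le> t"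
  then show "(\<lambda>s. Fcoef f g \<alpha> x s) differentiable (at t within {0..})"
    using F_deriv differentiableI_vector by blast
next
  fix \<delta> :: real assume d: "0 < \<delta> \<and> \<delta> < 1"
  show "(\<Sum>\<^sub>\<infinity>\<alpha>. (SUP xt\<in>{(x, t). cmod x \<le> R\<^sup>2 \<and> 0 \<le> t}.
                         ennreal (cmod (Fcoef f g \<alpha> (fst xt) (snd xt))))
                      * ennreal ((1 - \<delta>) * R) ^ (fst \<alpha> + snd \<alpha>))
              \<le> ennreal (4 * M / (\<omega> * \<delta>\<^sup>2))"
    using part1 d by blast
  show "(\<Sum>\<^sub>\<infinity>\<alpha>. (SUP xt\<in>{(x, t). cmod x \<le> R\<^sup>2 \<and> 0 \<le> t}.
                         ennreal (cmod (vector_derivative (\<lambda>s. Fcoef f g \<alpha> (fst xt) s)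
                                          (at (snd xt) within {0..}))))
                      * ennreal ((1 - \<delta>) * R) ^ (fst \<alpha> + snd \<alpha>))
              \<le> ennreal (4 * M / (\<omega> * \<delta>\<^sup>2))"
    using part2 d by blast
  fix p q :: complex and t :: real
  assume "cmod p \<le> (1 - \<delta>) * R \<and> cmod q \<le> (1 - \<delta>) * R \<and> 0 \<le> t"
  then show "let dchi = (\<Sum>\<^sub>\<infinity>\<alpha>. vector_derivative (\<lambda>s. Fcoef f g \<alpha> (p * q) s)
                                      (at t within {0..}) * p ^ fst \<alpha> * q ^ snd \<alpha>)
                in (\<lambda>\<alpha>. Fcoef f g \<alpha> (p * q) t * p ^ fst \<alpha> * q ^ snd \<alpha>) summable_on UNIV \<and>
                   cmod (chi f g p q t) \<le> 4 * M / (\<omega> * \<delta>\<^sup>2) \<and>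
                   (\<lambda>\<alpha>. vector_derivative (\<lambda>s. Fcoef f g \<alpha> (p * q) s) (at t within {0..})
                         * p ^ fst \<alpha> * q ^ snd \<alpha>) summable_on UNIV \<and>
                   cmod dchi \<le> 4 * M / (\<omega> * \<delta>\<^sup>2) \<and>
                   ((\<lambda>s. chi f g p q s) has_vector_derivative dchi) (at t within {0..}) \<and>
                   (\<exists>dp dq. ((\<lambda>p'. chi f g p' q t) has_field_derivative dp) (at p) \<and>
                            ((\<lambda>q'. chi f g p q' t) has_field_derivative dq) (at q) \<and>
                            g (p * q) t * (q * dq - p * dp) + dchi = taylor_eval f p q t)"
    using part3 d by blast
qed

end

theorem proposition1:
  fixes \<omega> R M :: real
    and f :: "nat \<times> nat \<Rightarrow> real \<Rightarrow> complex"
    and g :: "complex \<Rightarrow> real \<Rightarrow> complex"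
  assumes \<omega>: "0 < \<omega>" "\<omega> \<le> 1"
    and R: "0 < R" and M: "0 < M"
    and f_mixed: "\<And>\<alpha> t. 0 \<le> t \<Longrightarrow> fst \<alpha> + snd \<alpha> < 3 \<or> fst \<alpha> = snd \<alpha> \<Longrightarrow> f \<alpha> t = 0"
    and f_cont: "\<And>\<alpha>. continuous_on {0..} (f \<alpha>)"
    and g_hol: "\<And>t. 0 \<le> t \<Longrightarrow> (\<lambda>x. g x t) holomorphic_on cball 0 (R\<^sup>2)"
    and g_cont: "\<And>x. cmod x \<le> R\<^sup>2 \<Longrightarrow> continuous_on {0..} (g x)"
    and F_norm: "taylor_norm f R \<le> ennreal M"
    and g_re: "\<And>x t. cmod x \<le> R\<^sup>2 \<Longrightarrow> 0 \<le> t \<Longrightarrow> Re (g x t) \<ge> \<omega> / 2"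
    and g_abs: "\<And>x t. cmod x \<le> R\<^sup>2 \<Longrightarrow> 0 \<le> t \<Longrightarrow> cmod (g x t) \<le> 3 / 2 * \<omega>"
  shows "(\<forall>\<alpha> x t. cmod x \<le> R\<^sup>2 \<and> 0 \<le> t \<longrightarrow>
            (\<lambda>s. Fcoef f g \<alpha> x s) differentiable (at t within {0..})) \<and>
         (\<forall>\<delta>::real. 0 < \<delta> \<and> \<delta> < 1 \<longrightarrow>
            (\<Sum>\<^sub>\<infinity>\<alpha>. (SUP xt\<in>{(x, t). cmod x \<le> R\<^sup>2 \<and> 0 \<le> t}.
                         ennreal (cmod (Fcoef f g \<alpha> (fst xt) (snd xt))))
                      * ennreal ((1 - \<delta>) * R) ^ (fst \<alpha> + snd \<alpha>))
              \<le> ennreal (4 * M / (\<omega> * \<delta>\<^sup>2)) \<and>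
            (\<Sum>\<^sub>\<infinity>\<alpha>. (SUP xt\<in>{(x, t). cmod x \<le> R\<^sup>2 \<and> 0 \<le> t}.
                         ennreal (cmod (vector_derivative (\<lambda>s. Fcoef f g \<alpha> (fst xt) s)
                                          (at (snd xt) within {0..}))))
                      * ennreal ((1 - \<delta>) * R) ^ (fst \<alpha> + snd \<alpha>))
              \<le> ennreal (4 * M / (\<omega> * \<delta>\<^sup>2)) \<and>
            (\<forall>p q t. cmod p \<le> (1 - \<delta>) * R \<and> cmod q \<le> (1 - \<delta>) * R \<and> 0 \<le> t \<longrightarrow>
               (let dchi = (\<Sum>\<^sub>\<infinity>\<alpha>. vector_derivative (\<lambda>s. Fcoef f g \<alpha> (p * q) s)
                                      (at t within {0..}) * p ^ fst \<alpha> * q ^ snd \<alpha>)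
                in (\<lambda>\<alpha>. Fcoef f g \<alpha> (p * q) t * p ^ fst \<alpha> * q ^ snd \<alpha>) summable_on UNIV \<and>
                   cmod (chi f g p q t) \<le> 4 * M / (\<omega> * \<delta>\<^sup>2) \<and>
                   (\<lambda>\<alpha>. vector_derivative (\<lambda>s. Fcoef f g \<alpha> (p * q) s) (at t within {0..})
                         * p ^ fst \<alpha> * q ^ snd \<alpha>) summable_on UNIV \<and>
                   cmod dchi \<le> 4 * M / (\<omega> * \<delta>\<^sup>2) \<and>
                   ((\<lambda>s. chi f g p q s) has_vector_derivative dchi) (at t within {0..}) \<and>
                   (\<exists>dp dq. ((\<lambda>p'. chi f g p' q t) has_field_derivative dp) (at p) \<and>
                            ((\<lambda>q'. chi f g p q' t) has_field_derivative dq) (at q) \<and>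
                            g (p * q) t * (q * dq - p * dp) + dchi = taylor_eval f p q t))))"
proof -
  interpret setting \<omega> R M f g
    using assms by unfold_locales auto
  show ?thesis by (rule main)
qed



end
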